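(* Assume $\mu$ satisfies $(\mathrm H_\mu)$, and let $b_n,h_n$ be as in the context. Let $\mathcal H$ be the height of an (unconditioned) $\mu$-Bienaymé tree and $Q_x=\mathbf P(\mathcal H\ge x)$ for $x\ge0$. Then for every $\varepsilon>0$, as $n\to\infty$, \[ b_n\,Q_{(1+\varepsilon)h_n}\to0\qquad\text{and}\qquad b_n\,Q_{(1-\varepsilon)h_n}\to\infty. \]
   Context: Condition $(\mathrm H_\mu)$: $\mu=(\mu_k)_{k\ge0}$ is a probability measure on $\mathbb Z_+$ with $\sum_k k\mu_k=1$, and there is a slowly varying function $L:\mathbb R_+\to\mathbb R_+$ with $\mu_n=L(n)/n^2$ for all $n\ge1$. Let $Y\sim\mu$, $X=Y-1$, $(a_n)$ a sequence with $n\mathbf P(Y\ge a_n)\to1$, $b_n=n\,\mathbf E[X\mathbf 1_{\{|X|>a_n\}}]$ and $h_n=\int_1^{n\mathbf E[Y\mathbf 1_{\{Y\ge a_n\}}]}\frac{\mathrm dx}{x\mathbf E[Y\mathbf 1_{\{Y\ge x\}}]}$. A $\mu$-Bienaymé tree is the family tree of a Galton–Watson process with offspring law $\mu$ started from one individual; its height is the maximal distance of a vertex from the root. *)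

theory Defs
  imports "HOL-Probability.Probability"
begin

definition slowly_varying :: "(real \<Rightarrow> real) \<Rightarrow> bool" where
  "slowly_varying L \<longleftrightarrow> L \<in> borel_measurable borel \<and> (\<forall>x>0. L x > 0) \<and>
     (\<forall>c>0. ((\<lambda>x. L (c * x) / L x) \<longlongrightarrow> 1) at_top)"

definition H_mu :: "nat pmf \<Rightarrow> bool" where
  "H_mu \<mu> \<longleftrightarrow> (\<lambda>k. real k * pmf \<mu> k) sums 1 \<and>
     (\<exists>L. slowly_varying L \<and> (\<forall>n\<ge>1. pmf \<mu> n = L (real n) / (real n)^2))"

primrec conv_pow :: "nat pmf \<Rightarrow> nat \<Rightarrow> nat pmf" where
  "conv_pow \<mu> 0 = return_pmf 0"
| "conv_pow \<mu> (Suc k) = bind_pmf \<mu> (\<lambda>a. map_pmf (\<lambda>s. a + s) (conv_pow \<mu> k))"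

text \<open>Law of the generation size Z_n of the Galton--Watson (Bienayme) process
  with offspring law mu started from one individual.\<close>
primrec gw_gen :: "nat pmf \<Rightarrow> nat \<Rightarrow> nat pmf" where
  "gw_gen \<mu> 0 = return_pmf 1"
| "gw_gen \<mu> (Suc n) = bind_pmf (gw_gen \<mu> n) (conv_pow \<mu>)"

text \<open>Q_x = P(height >= x): the height (an integer, possibly infinite) is >= x
  iff generation ceil(x) is non-empty.\<close>
definition height_tail :: "nat pmf \<Rightarrow> real \<Rightarrow> real" where
  "height_tail \<mu> x = measure_pmf.prob (gw_gen \<mu> (nat \<lceil>x\<rceil>)) {z. z > 0}"

definition b_seq :: "nat pmf \<Rightarrow> (nat \<Rightarrow> real) \<Rightarrow> nat \<Rightarrow> real" where
  "b_seq \<mu> a n = real n * measure_pmf.expectation \<mu>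
      (\<lambda>k. (real k - 1) * (if \<bar>real k - 1\<bar> > a n then 1 else 0))"

definition trunc_mean :: "nat pmf \<Rightarrow> real \<Rightarrow> real" where
  "trunc_mean \<mu> x = measure_pmf.expectation \<mu> (\<lambda>k. real k * (if real k \<ge> x then 1 else 0))"

definition h_seq :: "nat pmf \<Rightarrow> (nat \<Rightarrow> real) \<Rightarrow> nat \<Rightarrow> real" where
  "h_seq \<mu> a n = (LBINT x=1..(real n * trunc_mean \<mu> (a n)). 1 / (x * trunc_mean \<mu> x))"

end

theory Submission
  imports Defs
begin

lemma pmf_nat_expectation_sums:
  fixes M :: "nat pmf" and f :: "nat \<Rightarrow> real"
  assumes "summable (\<lambda>k. pmf M k * \<bar>f k\<bar>)"
  shows "(\<lambda>k. pmf M k * f k) sums measure_pmf.expectation M f"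
proof -
  have "measure_pmf.expectation M f = integral\<^sup>L (count_space UNIV) (\<lambda>k. pmf M k * f k)"
    unfolding measure_pmf_eq_density by (subst integral_density) (auto simp: pmf_nonneg)
  moreover have "integrable (count_space UNIV) (\<lambda>k. pmf M k * f k)"
    using assms by (subst integrable_count_space_nat_iff) (simp add: abs_mult pmf_nonneg)
  ultimately show ?thesis using sums_integral_count_space_nat by metis
qed

lemma summable_pmf_nat: "summable (pmf (M::nat pmf))"
  using pmf_abs_summable[of M UNIV] abs_summable_on_nat_iff'[of "pmf M"] by (simp add: pmf_nonneg)

lemma pmf_nat_prob_sums:
  fixes M :: "nat pmf"
  shows "(\<lambda>k. if k \<in> A then pmf M k else 0) sums measure_pmf.prob M A"
proof -
  have "(\<lambda>k. pmf M k * indicator A k) sums measure_pmf.expectation M (indicator A)"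
    by (rule pmf_nat_expectation_sums) (rule summable_comparison_test'[of "pmf M"], auto simp: indicator_def summable_pmf_nat) 
  moreover have "measure_pmf.expectation M (indicator A) = measure_pmf.prob M A"
    by simp
  moreover have "(\<lambda>k. pmf M k * indicator A k) = (\<lambda>k. if k \<in> A then pmf M k else 0)"
    by (auto simp: indicator_def)
  ultimately show ?thesis by simp
qed

locale crit =
  fixes \<mu> :: "nat pmf" and L :: "real \<Rightarrow> real"
  assumes mean: "(\<lambda>k. real k * pmf \<mu> k) sums 1"
    and SV: "slowly_varying L"
    and pL: "\<And>n. n \<ge> 1 \<Longrightarrow> pmf \<mu> n = L (real n) / (real n)^2"
begin

lemma L_pos: "x > 0 \<Longrightarrow> L x > 0"
  using SV unfolding slowly_varying_def by auto

lemma p_pos: "k \<ge> 1 \<Longrightarrow> pmf \<mu> k > 0"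
  using pL[of k] L_pos[of "real k"] by simp

lemma summ_kp: "summable (\<lambda>k. real k * pmf \<mu> k)"
  using mean sums_summable by blast

definition ell :: "real \<Rightarrow> real" where
  "ell x = (\<Sum>k. if x \<le> real k then real k * pmf \<mu> k else 0)"

lemma ell_summable: "summable (\<lambda>k. if x \<le> real k then real k * pmf \<mu> k else 0)"
  by (rule summable_comparison_test'[OF summ_kp]) (auto simp: pmf_nonneg)

lemma trunc_mean_eq: "trunc_mean \<mu> x = ell x"
proof -
  have "(\<lambda>k. pmf \<mu> k * (real k * (if real k \<ge> x then 1 else 0))) sums trunc_mean \<mu> x"
    unfolding trunc_mean_def
    by (rule pmf_nat_expectation_sums, rule summable_comparison_test'[OF summ_kp]) (auto simp: pmf_nonneg)
  moreover have "(\<lambda>k. pmf \<mu> k * (real k * (if real k \<ge> x then 1 else 0))) =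
     (\<lambda>k. if x \<le> real k then real k * pmf \<mu> k else 0)" by auto
  ultimately show ?thesis unfolding ell_def using sums_unique by metis
qed

lemma ell_mono: "x \<le> y \<Longrightarrow> ell y \<le> ell x"
  unfolding ell_def by (rule suminf_le[OF _ ell_summable ell_summable]) (auto simp: pmf_nonneg)

lemma ell_pos: "ell x > 0"
proof -
  define k0 where "k0 = nat \<lceil>max x 1\<rceil>"
  have k0: "x \<le> real k0" "k0 \<ge> 1" unfolding k0_def by linarith+
  show ?thesis unfolding ell_def
    by (rule suminf_pos2[OF ell_summable, where i=k0]) (use k0 p_pos[of k0] in \<open>auto simp: pmf_nonneg\<close>)
qed

lemma ell_le1: "ell x \<le> 1"
proof -
  have "ell x \<le> (\<Sum>k. real k * pmf \<mu> k)"
    unfolding ell_def by (rule suminf_le[OF _ ell_summable summ_kp]) (auto simp: pmf_nonneg)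
  then show ?thesis using mean sums_unique by metis
qed

lemma ell_tendsto0: "(ell \<longlongrightarrow> 0) at_top"
proof (rule tendstoI)
  fix r :: real assume r: "r > 0"
  have "(\<lambda>N. \<Sum>k<N. real k * pmf \<mu> k) \<longlonglongrightarrow> 1" using mean unfolding sums_def .
  then obtain N where N: "dist (\<Sum>k<N. real k * pmf \<mu> k) 1 < r"
  proof -
    from tendstoD[OF \<open>(\<lambda>N. \<Sum>k<N. real k * pmf \<mu> k) \<longlonglongrightarrow> 1\<close> r]
    obtain N where "\<forall>n\<ge>N. dist (\<Sum>k<n. real k * pmf \<mu> k) 1 < r" unfolding eventually_sequentially by blast
    then show ?thesis using that by blast
  qed
  have "ell x < r" if x: "x \<ge> real N" for x
  proof -
    have S: "(\<lambda>k. (if x \<le> real k then real k * pmf \<mu> k else 0) + (if k < N then real k * pmf \<mu> k else 0))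
        sums (ell x + (\<Sum>k<N. real k * pmf \<mu> k))"
      unfolding ell_def
    proof (intro sums_add summable_sums ell_summable)
      have "(\<lambda>k. if k \<in> {..<N} then real k * pmf \<mu> k else 0) sums (\<Sum>k\<in>{..<N}. real k * pmf \<mu> k)"
        by (rule sums_If_finite_set) simp
      then show "(\<lambda>k. if k < N then real k * pmf \<mu> k else 0) sums (\<Sum>k<N. real k * pmf \<mu> k)" by simp
    qed
    have "ell x + (\<Sum>k<N. real k * pmf \<mu> k) \<le> 1"
    proof (rule sums_le[OF _ S mean])
      fix k show "(if x \<le> real k then real k * pmf \<mu> k else 0) + (if k < N then real k * pmf \<mu> k else 0) \<le> real k * pmf \<mu> k"
        using x by (auto simp: pmf_nonneg)
    qed
    then show ?thesis using N by (auto simp: dist_real_def)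
  qed
  then show "\<forall>\<^sub>F x in at_top. dist (ell x) 0 < r"
    unfolding eventually_at_top_linorder dist_real_def using ell_pos
    by (metis abs_of_pos diff_zero)
qed

end

context crit begin

definition f :: "real \<Rightarrow> real" where "f s = (\<Sum>k. pmf \<mu> k * s ^ k)"

lemma summable_p: "summable (pmf \<mu>)" by (rule summable_pmf_nat)

lemma p_sums1: "pmf \<mu> sums 1"
  using pmf_nat_prob_sums[of UNIV \<mu>] by simp

lemma f_sums: "\<bar>s\<bar> \<le> 1 \<Longrightarrow> (\<lambda>k. pmf \<mu> k * s ^ k) sums f s"
  unfolding f_def
  by (rule summable_sums, rule summable_comparison_test'[OF summable_p])
     (auto simp: abs_mult power_abs pmf_nonneg intro!: mult_left_le power_le_one)

lemma f_range: "0 \<le> s \<Longrightarrow> s \<le> 1 \<Longrightarrow> 0 \<le> f s \<and> f s \<le> 1"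
proof -
  assume s: "0 \<le> s" "s \<le> 1"
  have "f s \<le> 1"
    by (rule sums_le[OF _ f_sums p_sums1]) (use s in \<open>auto intro!: mult_left_le power_le_one simp: pmf_nonneg\<close>)
  moreover have "0 \<le> f s"
    using f_sums[of s] s unfolding f_def by (intro suminf_nonneg) (auto simp: pmf_nonneg sums_iff)
  ultimately show ?thesis by simp
qed

lemma nn_pgf: assumes "0 \<le> s" "s \<le> 1"
  shows "(\<integral>\<^sup>+z. ennreal (s ^ z) \<partial>measure_pmf \<mu>) = ennreal (f s)"
proof -
  have "(\<integral>\<^sup>+z. ennreal (s ^ z) \<partial>measure_pmf \<mu>) = (\<integral>\<^sup>+z. ennreal (pmf \<mu> z * s ^ z) \<partial>count_space UNIV)"
    by (simp add: nn_integral_measure_pmf ennreal_mult' pmf_nonneg assms)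
  also have "\<dots> = (\<Sum>z. ennreal (pmf \<mu> z * s ^ z))" by (rule nn_integral_count_space_nat)
  also have "\<dots> = ennreal (f s)"
    unfolding f_def using f_sums[of s] assms
    by (intro suminf_ennreal2) (auto simp: pmf_nonneg sums_iff)
  finally show ?thesis .
qed

lemma conv_pgf: assumes "0 \<le> s" "s \<le> 1"
  shows "(\<integral>\<^sup>+z. ennreal (s ^ z) \<partial>measure_pmf (conv_pow \<mu> k)) = ennreal (f s ^ k)"
proof (induction k)
  case 0 then show ?case by simp
next
  case (Suc k)
  have "(\<integral>\<^sup>+z. ennreal (s ^ z) \<partial>measure_pmf (conv_pow \<mu> (Suc k)))
      = (\<integral>\<^sup>+a. \<integral>\<^sup>+z. ennreal (s ^ a) * ennreal (s ^ z) \<partial>measure_pmf (conv_pow \<mu> k) \<partial>measure_pmf \<mu>)"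
    using assms by (simp add: power_add ennreal_mult)
  also have "\<dots> = (\<integral>\<^sup>+a. ennreal (s ^ a) * ennreal (f s ^ k) \<partial>measure_pmf \<mu>)"
    by (simp add: nn_integral_cmult Suc)
  also have "\<dots> = ennreal (f s) * ennreal (f s ^ k)"
    by (simp add: nn_integral_multc nn_pgf assms)
  also have "\<dots> = ennreal (f s ^ Suc k)"
    using f_range[OF assms] by (simp add: ennreal_mult)
  finally show ?case .
qed

lemma gw_pgf: "0 \<le> s \<Longrightarrow> s \<le> 1 \<Longrightarrow>
  (\<integral>\<^sup>+z. ennreal (s ^ z) \<partial>measure_pmf (gw_gen \<mu> m)) = ennreal ((f ^^ m) s)"
proof (induction m arbitrary: s)
  case 0 then show ?case by simp
next
  case (Suc m)
  have "(\<integral>\<^sup>+z. ennreal (s ^ z) \<partial>measure_pmf (gw_gen \<mu> (Suc m)))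
     = (\<integral>\<^sup>+k. ennreal (f s ^ k) \<partial>measure_pmf (gw_gen \<mu> m))"
    using Suc.prems by (simp add: conv_pgf)
  also have "\<dots> = ennreal ((f ^^ m) (f s))"
    using f_range[OF Suc.prems] by (intro Suc.IH) auto
  finally show ?case by (simp add: funpow_swap1)
qed

lemma pmf_gw0: "pmf (gw_gen \<mu> m) 0 = (f ^^ m) 0"
proof -
  have "(\<integral>\<^sup>+z. ennreal ((0::real) ^ z) \<partial>measure_pmf (gw_gen \<mu> m)) = 
        (\<integral>\<^sup>+z. indicator {0} z \<partial>measure_pmf (gw_gen \<mu> m))"
    by (intro nn_integral_cong) (auto simp: indicator_def)
  also have "\<dots> = ennreal (pmf (gw_gen \<mu> m) 0)"
    by (simp add: emeasure_pmf_single)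
  finally have "ennreal (pmf (gw_gen \<mu> m) 0) = ennreal ((f ^^ m) 0)"
    using gw_pgf[of 0 m] by simp
  moreover have "0 \<le> (f ^^ m) 0"
  proof -
    have "0 \<le> (f ^^ m) 0 \<and> (f ^^ m) 0 \<le> 1" by (induction m) (auto simp: f_range)
    then show ?thesis by simp
  qed
  ultimately show ?thesis by (simp add: pmf_nonneg)
qed

definition Q :: "nat \<Rightarrow> real" where "Q m = 1 - (f ^^ m) 0"

lemma Q_range: "0 \<le> Q m \<and> Q m \<le> 1"
proof -
  have "0 \<le> (f ^^ m) 0 \<and> (f ^^ m) 0 \<le> 1" by (induction m) (auto simp: f_range)
  then show ?thesis unfolding Q_def by simp
qed

lemma Q_0: "Q 0 = 1" by (simp add: Q_def)

lemma Q_Suc: "Q (Suc m) = 1 - f (1 - Q m)"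
  by (simp add: Q_def)

lemma height_tail_eq: "height_tail \<mu> x = Q (nat \<lceil>x\<rceil>)"
proof -
  have "{z. z > 0} = UNIV - {0::nat}" by auto
  then have "height_tail \<mu> x = 1 - measure_pmf.prob (gw_gen \<mu> (nat \<lceil>x\<rceil>)) {0}"
    unfolding height_tail_def using measure_pmf.prob_compl[of "{0::nat}"] by simp
  then show ?thesis by (simp add: measure_pmf_single pmf_gw0 Q_def)
qed

end

definition gg :: "real \<Rightarrow> nat \<Rightarrow> real" where "gg u k = (1 - u) ^ k - 1 + real k * u"

lemma gg_nonneg: "0 \<le> u \<Longrightarrow> u \<le> 1 \<Longrightarrow> 0 \<le> gg u k"
  using Bernoulli_inequality[of "-u" k] unfolding gg_def by simp

lemma gg_le_ku: "0 \<le> u \<Longrightarrow> u \<le> 1 \<Longrightarrow> gg u k \<le> real k * u"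
  unfolding gg_def by (simp add: power_le_one)

lemma gg_ge: "0 \<le> u \<Longrightarrow> u \<le> 1 \<Longrightarrow> real k * u - 1 \<le> gg u k"
  unfolding gg_def by simp

lemma pow_le_sq: "0 \<le> u \<Longrightarrow> u \<le> 1 \<Longrightarrow> (1 - u) ^ k \<le> 1 - real k * u + (real k)^2 * u^2"
proof (induction k)
  case 0 then show ?case by simp
next
  case (Suc k)
  have "(1 - u) ^ Suc k = (1 - u) * (1 - u) ^ k" by simp
  also have "\<dots> \<le> (1 - u) * (1 - real k * u + (real k)^2 * u^2)"
    using Suc by (intro mult_left_mono) auto
  also have "\<dots> \<le> 1 - real (Suc k) * u + (real (Suc k))^2 * u^2"
  proof -
    have "0 \<le> (real k)^2 * u^3 + (real k + 1) * u^2"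
      using Suc.prems by simp
    then show ?thesis by (simp add: algebra_simps power2_eq_square power3_eq_cube)
  qed
  finally show ?case .
qed

lemma gg_le_sq: "0 \<le> u \<Longrightarrow> u \<le> 1 \<Longrightarrow> gg u k \<le> (real k)^2 * u^2"
  using pow_le_sq[of u k] unfolding gg_def by simp

context crit begin

definition D :: "real \<Rightarrow> real" where "D u = f (1 - u) - (1 - u)"

lemma D_sums: assumes "0 \<le> u" "u \<le> 1" shows "(\<lambda>k. pmf \<mu> k * gg u k) sums D u"
proof -
  have "(\<lambda>k. pmf \<mu> k * (1 - u) ^ k - pmf \<mu> k + u * (real k * pmf \<mu> k)) sums (f (1 - u) - 1 + u * 1)"
    using assms by (intro sums_add sums_diff f_sums p_sums1 sums_mult mean) auto
  then show ?thesis unfolding D_def gg_def by (simp add: algebra_simps)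
qed

lemma D_nonneg: "0 \<le> u \<Longrightarrow> u \<le> 1 \<Longrightarrow> 0 \<le> D u"
proof -
  assume u: "0 \<le> u" "u \<le> 1"
  show ?thesis unfolding sums_unique[OF D_sums[OF u]]
    by (rule suminf_nonneg[OF sums_summable[OF D_sums[OF u]]]) (simp add: gg_nonneg[OF u] pmf_nonneg)
qed

lemma D_lt: assumes "0 < u" "u \<le> 1" shows "D u < u"
proof -
  have S: "(\<lambda>k. pmf \<mu> k * (real k * u - gg u k)) sums (u - D u)"
  proof -
    have "(\<lambda>k. u * (real k * pmf \<mu> k) - pmf \<mu> k * gg u k) sums (u * 1 - D u)"
      using assms by (intro sums_diff sums_mult mean D_sums) auto
    then show ?thesis by (simp add: algebra_simps)
  qed
  have "0 < u - D u" unfolding sums_unique[OF S]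
  proof (rule suminf_pos2[OF sums_summable[OF S], where i=1])
    show "0 \<le> pmf \<mu> k * (real k * u - gg u k)" for k
      using gg_le_ku[of u k] assms by (simp add: pmf_nonneg)
    show "0 < pmf \<mu> 1 * (real 1 * u - gg u 1)"
      using p_pos[of 1] assms by (simp add: gg_def)
  qed
  then show ?thesis by simp
qed

lemma D_ge2: assumes "0 \<le> u" "u \<le> 1" shows "pmf \<mu> 2 * u^2 \<le> D u"
proof -
  have "(\<Sum>k\<in>{2}. pmf \<mu> k * gg u k) \<le> D u"
    unfolding sums_unique[OF D_sums[OF assms]]
    by (rule sum_le_suminf[OF sums_summable[OF D_sums[OF assms]]]) (simp_all add: gg_nonneg[OF assms] pmf_nonneg)
  then show ?thesis by (simp add: gg_def power2_eq_square algebra_simps)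
qed

lemma Q_Suc': "Q (Suc m) = Q m - D (Q m)"
  unfolding Q_Suc D_def by simp

lemma Q_pos: "0 < Q m"
proof (induction m)
  case 0 then show ?case by (simp add: Q_0)
next
  case (Suc m) then show ?case using D_lt[of "Q m"] Q_range[of m] by (simp add: Q_Suc')
qed

lemma Q_dec: "Q (Suc m) \<le> Q m"
  using D_nonneg[of "Q m"] Q_range[of m] by (simp add: Q_Suc')

lemma Q_lim: "Q \<longlonglongrightarrow> 0"
proof -
  have dec: "decseq Q" using Q_dec by (simp add: decseq_SucI)
  obtain q where q: "Q \<longlonglongrightarrow> q" "\<forall>i. q \<le> Q i"
    using decseq_convergent[OF dec, of 0] Q_range by blast
  have q0: "0 \<le> q" using q(1) Q_range by (meson LIMSEQ_le_const)
  have "(\<lambda>m. Q (Suc m)) \<longlonglongrightarrow> q" using q(1) by (rule LIMSEQ_Suc)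
  moreover have "(\<lambda>m. Q m - pmf \<mu> 2 * (Q m)^2) \<longlonglongrightarrow> q - pmf \<mu> 2 * q^2"
    by (intro tendsto_intros q(1))
  moreover have "Q (Suc m) \<le> Q m - pmf \<mu> 2 * (Q m)^2" for m
    using D_ge2[of "Q m"] Q_range[of m] by (simp add: Q_Suc')
  ultimately have "q \<le> q - pmf \<mu> 2 * q^2" by (intro LIMSEQ_le) auto
  then have "pmf \<mu> 2 * q^2 \<le> 0" by simp
  moreover have "pmf \<mu> 2 > 0" using p_pos[of 2] by simp
  ultimately have "q = 0" using q0 by (simp add: mult_le_0_iff)
  then show ?thesis using q(1) by simp
qed

end

lemma uct:
  fixes H :: "real \<Rightarrow> real"
  assumes Hm[measurable]: "H \<in> borel_measurable borel"
    and pw: "\<And>u. u \<ge> 0 \<Longrightarrow> ((\<lambda>t. H (t + u) - H t) \<longlongrightarrow> 0) at_top"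
    and A: "A > 0" and e: "e > 0"
  shows "\<exists>T. \<forall>t\<ge>T. \<forall>u\<in>{0..A}. \<bar>H (t + u) - H t\<bar> \<le> e"
proof (rule ccontr)
  assume "\<not> ?thesis"
  then have "\<forall>n::nat. \<exists>t u. t \<ge> real n \<and> u \<in> {0..A} \<and> \<bar>H (t + u) - H t\<bar> > e"
    by (meson not_le)
  then obtain t u where tu: "\<And>n. t n \<ge> real n" "\<And>n. u n \<in> {0..A}" "\<And>n. \<bar>H (t n + u n) - H (t n)\<bar> > e"
    by metis
  define F where "F n v = (if v \<in> {0..2*A} \<and> e/2 \<le> \<bar>H (t n + v) - H (t n)\<bar> then 1 else (0::real))" for n v
  define G where "G n w = (if w \<in> {0..2*A} \<and> e/2 \<le> \<bar>H (t n + u n + w) - H (t n + u n)\<bar> then 1 else (0::real))" for n w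
  define W where "W = (indicator {0..2*A} :: real \<Rightarrow> real)"
  have Wi: "integrable lborel W" unfolding W_def by (intro integrable_real_indicator) (auto simp: emeasure_lborel_Icc_eq)
  have Fm: "F n \<in> borel_measurable lborel" for n unfolding F_def by measurable
  have Gm: "G n \<in> borel_measurable lborel" for n unfolding G_def by measurable
  have lim_t: "filterlim t at_top sequentially"
    by (rule filterlim_at_top_mono[OF filterlim_real_sequentially]) (use tu in \<open>auto intro!: always_eventually\<close>)
  have lim_s: "filterlim (\<lambda>n. t n + u n) at_top sequentially"
    by (rule filterlim_at_top_mono[OF filterlim_real_sequentially]) (use tu in \<open>auto intro!: always_eventually add_increasing2\<close>)
  have Fl: "(\<lambda>n. F n v) \<longlonglongrightarrow> 0" for v
  proof (cases "v \<in> {0..2*A}")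
    case True
    have "(\<lambda>n. H (t n + v) - H (t n)) \<longlonglongrightarrow> 0"
      using filterlim_compose[OF pw lim_t] True by auto
    then have "eventually (\<lambda>n. \<bar>H (t n + v) - H (t n)\<bar> < e/2) sequentially"
      using e by (auto dest!: tendstoD[where e="e/2"] simp: dist_real_def)
    then have "eventually (\<lambda>n. F n v = 0) sequentially"
      by eventually_elim (auto simp: F_def)
    then show ?thesis by (rule tendsto_eventually)
  next
    case False then have "(\<lambda>n. F n v) = (\<lambda>n. 0)" by (auto simp: F_def)
    then show ?thesis by simp
  qed
  have Gl: "(\<lambda>n. G n v) \<longlonglongrightarrow> 0" for v
  proof (cases "v \<in> {0..2*A}")
    case True
    have "(\<lambda>n. H (t n + u n + v) - H (t n + u n)) \<longlonglongrightarrow> 0"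
      using filterlim_compose[OF pw lim_s] True by auto
    then have "eventually (\<lambda>n. \<bar>H (t n + u n + v) - H (t n + u n)\<bar> < e/2) sequentially"
      using e by (auto dest!: tendstoD[where e="e/2"] simp: dist_real_def)
    then have "eventually (\<lambda>n. G n v = 0) sequentially"
      by eventually_elim (auto simp: G_def)
    then show ?thesis by (rule tendsto_eventually)
  next
    case False then have "(\<lambda>n. G n v) = (\<lambda>n. 0)" by (auto simp: G_def)
    then show ?thesis by simp
  qed
  have Fb: "AE x in lborel. norm (F n x) \<le> W x" for n by (auto simp: F_def W_def)
  have Gb: "AE x in lborel. norm (G n x) \<le> W x" for n by (auto simp: G_def W_def)
  have FI: "(\<lambda>n. integral\<^sup>L lborel (F n)) \<longlonglongrightarrow> integral\<^sup>L lborel (\<lambda>_::real. 0::real)"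
    by (rule integral_dominated_convergence[OF _ Fm Wi _ Fb]) (auto simp: Fl)
  have GI: "(\<lambda>n. integral\<^sup>L lborel (G n)) \<longlonglongrightarrow> integral\<^sup>L lborel (\<lambda>_::real. 0::real)"
    by (rule integral_dominated_convergence[OF _ Gm Wi _ Gb]) (auto simp: Gl)
  have Fint: "integrable lborel (F n)" for n
    by (rule integrable_dominated_convergence2[where f="\<lambda>_. 0", OF _ Fm Wi _ Fb]) (auto simp: Fl)
  have Gint: "integrable lborel (G n)" for n
    by (rule integrable_dominated_convergence2[where f="\<lambda>_. 0", OF _ Gm Wi _ Gb]) (auto simp: Gl)
  have key: "A \<le> integral\<^sup>L lborel (F n) + integral\<^sup>L lborel (G n)" for n
  proof -
    have G': "integral\<^sup>L lborel (G n) = integral\<^sup>L lborel (\<lambda>x. G n (- u n + 1 * x))"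
      using lborel_integral_real_affine[where c=1 and f="G n" and t="- u n"] by simp
    have G'i: "integrable lborel (\<lambda>x. G n (- u n + 1 * x))"
      using lborel_integrable_real_affine[OF Gint, where c=1 and t="- u n"] by simp
    have "integral\<^sup>L lborel (indicator {A..2*A} :: real \<Rightarrow> real) \<le> integral\<^sup>L lborel (\<lambda>x. F n x + G n (- u n + 1 * x))"
    proof (rule integral_mono)
      show "integrable lborel (indicator {A..2*A} :: real \<Rightarrow> real)"
        by (intro integrable_real_indicator) (auto simp: emeasure_lborel_Icc_eq)
      show "integrable lborel (\<lambda>x. F n x + G n (- u n + 1 * x))"
        using Fint G'i by auto
      fix x :: real
      show "indicator {A..2*A} x \<le> F n x + G n (- u n + 1 * x)"
      proof (cases "x \<in> {A..2*A}")
        case True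
        have F0: "F n x \<ge> 0" "G n (- u n + 1 * x) \<ge> 0" by (auto simp: F_def G_def)
        have "F n x = 1 \<or> G n (- u n + 1 * x) = 1"
        proof (rule ccontr)
          assume "\<not> ?thesis"
          then have c1: "\<bar>H (t n + x) - H (t n)\<bar> < e/2" and c2: "\<bar>H (t n + u n + (- u n + x)) - H (t n + u n)\<bar> < e/2"
            using True tu(2)[of n] A by (auto simp: F_def G_def split: if_splits)
          have "t n + u n + (- u n + x) = t n + x" by simp
          then have c3: "\<bar>H (t n + x) - H (t n + u n)\<bar> < e/2" using c2 by simp
          show False using c1 c3 tu(3)[of n] by linarith
        qed
        then show ?thesis using True F0 by auto
      qed (auto simp: F_def G_def)
    qed
    also have "\<dots> = integral\<^sup>L lborel (F n) + integral\<^sup>L lborel (G n)"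
      using Fint G'i G' by (simp add: integral_add)
    finally show ?thesis using A by simp
  qed
  have "(\<lambda>n. integral\<^sup>L lborel (F n) + integral\<^sup>L lborel (G n)) \<longlonglongrightarrow> 0"
    using tendsto_add[OF FI GI] by simp
  then have "A \<le> 0" using key by (intro LIMSEQ_le_const) auto
  then show False using A by simp
qed

context crit begin

lemma L_meas[measurable]: "L \<in> borel_measurable borel"
  using SV unfolding slowly_varying_def by auto

lemma L_ratio: "c > 0 \<Longrightarrow> ((\<lambda>x. L (c * x) / L x) \<longlongrightarrow> 1) at_top"
  using SV unfolding slowly_varying_def by auto

lemma L_unif:
  assumes A: "A > 0"
  shows "\<exists>X\<ge>1. \<forall>x\<ge>X. \<forall>c\<in>{1..exp A}. L (c * x) \<le> exp 1 * L x \<and> L x \<le> exp 1 * L (c * x)"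
proof -
  define H where "H t = ln (L (exp t))" for t
  have Hm: "H \<in> borel_measurable borel" unfolding H_def by measurable
  have pw: "((\<lambda>t. H (t + u) - H t) \<longlongrightarrow> 0) at_top" if "u \<ge> 0" for u
  proof -
    have "((\<lambda>t. L (exp u * exp t) / L (exp t)) \<longlongrightarrow> 1) at_top"
      using filterlim_compose[OF L_ratio[of "exp u"] exp_at_top] by simp
    then have "((\<lambda>t. ln (L (exp u * exp t) / L (exp t))) \<longlongrightarrow> ln 1) at_top"
      by (intro tendsto_ln) auto
    moreover have "ln (L (exp u * exp t) / L (exp t)) = H (t + u) - H t" for t
      unfolding H_def using L_pos[of "exp t"] L_pos[of "exp u * exp t"]
      by (simp add: ln_div exp_add mult.commute)
    ultimately show ?thesis by simp
  qed
  obtain T where T: "\<forall>t\<ge>T. \<forall>u\<in>{0..A}. \<bar>H (t + u) - H t\<bar> \<le> 1"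
    using uct[OF Hm pw A, of 1] by auto
  show ?thesis
  proof (intro exI[of _ "max 1 (exp T)"] conjI allI impI ballI)
    fix x c assume x: "max 1 (exp T) \<le> x" and c: "c \<in> {1..exp A}"
    have xpos: "x > 0" using x by simp
    have t: "ln x \<ge> T" using x by (simp add: ln_ge_iff) 
    have u: "ln c \<in> {0..A}" using c ln_le_cancel_iff[of c "exp A"] by auto
    have "\<bar>H (ln x + ln c) - H (ln x)\<bar> \<le> 1" using T t u by blast
    moreover have "H (ln x + ln c) = ln (L (c * x))" "H (ln x) = ln (L x)"
      unfolding H_def using xpos c by (auto simp: exp_add mult.commute)
    ultimately have h: "\<bar>ln (L (c * x)) - ln (L x)\<bar> \<le> 1" by simp
    have p1: "L (c * x) > 0" "L x > 0" using xpos c by (auto intro!: L_pos)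
    have "L (c * x) = exp (ln (L (c * x)))" "L x = exp (ln (L x))" using p1 by auto
    then have "L (c * x) \<le> exp (1 + ln (L x))" "L x \<le> exp (1 + ln (L (c * x)))"
      using h by (metis abs_le_D1 abs_le_D2 diff_le_eq add.commute minus_diff_eq exp_le_cancel_iff)+
    then show "L (c * x) \<le> exp 1 * L x" "L x \<le> exp 1 * L (c * x)"
      using p1 by (auto simp: exp_add)
  qed simp
qed

lemma ell_diff:
  assumes "x \<le> y"
  shows "ell x - ell y = (\<Sum>k\<in>{k. x \<le> real k \<and> real k < y}. real k * pmf \<mu> k)"
proof -
  have sub: "{k::nat. x \<le> real k \<and> real k < y} \<subseteq> {..<nat \<lceil>y\<rceil>}"
  proof
    fix k assume "k \<in> {k::nat. x \<le> real k \<and> real k < y}"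
    then have "int k < \<lceil>y\<rceil>" by (simp add: less_ceiling_iff)
    then show "k \<in> {..<nat \<lceil>y\<rceil>}" by simp
  qed
  have fin: "finite {k::nat. x \<le> real k \<and> real k < y}"
    by (rule finite_subset[OF sub]) simp
  have S1: "(\<lambda>k. (if x \<le> real k then real k * pmf \<mu> k else 0) - (if y \<le> real k then real k * pmf \<mu> k else 0))
         sums (ell x - ell y)"
    unfolding ell_def by (intro sums_diff summable_sums ell_summable)
  have eq: "(\<lambda>k. (if x \<le> real k then real k * pmf \<mu> k else 0) - (if y \<le> real k then real k * pmf \<mu> k else 0))
     = (\<lambda>k. if k \<in> {k. x \<le> real k \<and> real k < y} then real k * pmf \<mu> k else 0)"
  proof
    fix k show "(if x \<le> real k then real k * pmf \<mu> k else 0) - (if y \<le> real k then real k * pmf \<mu> k else 0)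
       = (if k \<in> {k. x \<le> real k \<and> real k < y} then real k * pmf \<mu> k else 0)"
      using assms by (cases "x \<le> real k"; cases "y \<le> real k") auto
  qed
  have S2: "(\<lambda>k. if k \<in> {k. x \<le> real k \<and> real k < y} then real k * pmf \<mu> k else 0) sums 
       (\<Sum>k\<in>{k. x \<le> real k \<and> real k < y}. real k * pmf \<mu> k)"
    by (rule sums_If_finite_set[OF fin])
  show ?thesis using S1 S2 unfolding eq by (rule sums_unique2)
qed
end

lemma card_block:
  assumes "y \<ge> 1"
  shows "y - 1 \<le> real (card {k::nat. y \<le> real k \<and> real k < 2 * y}) \<and>
         real (card {k::nat. y \<le> real k \<and> real k < 2 * y}) \<le> y + 1"
proof -
  have eq: "{k::nat. y \<le> real k \<and> real k < 2 * y} = {nat \<lceil>y\<rceil>..<nat \<lceil>2*y\<rceil>}"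
  proof (intro set_eqI iffI)
    fix k assume "k \<in> {k::nat. y \<le> real k \<and> real k < 2 * y}"
    then have "y \<le> real k" "real k < 2 * y" by auto
    then have "\<lceil>y\<rceil> \<le> int k" "int k < \<lceil>2*y\<rceil>" by (simp_all add: ceiling_le_iff less_ceiling_iff)
    then have "nat \<lceil>y\<rceil> \<le> k" "k < nat \<lceil>2*y\<rceil>" by linarith+
    then show "k \<in> {nat \<lceil>y\<rceil>..<nat \<lceil>2*y\<rceil>}" by simp
  next
    fix k assume "k \<in> {nat \<lceil>y\<rceil>..<nat \<lceil>2*y\<rceil>}"
    then have "nat \<lceil>y\<rceil> \<le> k" "k < nat \<lceil>2*y\<rceil>" by auto
    then have "\<lceil>y\<rceil> \<le> int k" "int k < \<lceil>2*y\<rceil>" by linarith+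
    then show "k \<in> {k::nat. y \<le> real k \<and> real k < 2 * y}" by (simp add: ceiling_le_iff less_ceiling_iff)
  qed
  have le: "\<lceil>y\<rceil> \<le> \<lceil>2*y\<rceil>" using assms by (intro ceiling_mono) simp
  have "real (card {nat \<lceil>y\<rceil>..<nat \<lceil>2*y\<rceil>}) = real (nat \<lceil>2*y\<rceil> - nat \<lceil>y\<rceil>)" by simp
  also have "\<dots> = of_int \<lceil>2*y\<rceil> - of_int \<lceil>y\<rceil>" using assms le
    by (simp add: of_nat_diff nat_le_iff)
  finally have c: "real (card {nat \<lceil>y\<rceil>..<nat \<lceil>2*y\<rceil>}) = of_int \<lceil>2*y\<rceil> - of_int \<lceil>y\<rceil>" .
  show ?thesis unfolding eq c
    using ceiling_correct[of y] ceiling_correct[of "2*y"] by linarith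
qed

context crit begin

lemma kp_eq: "k \<ge> 1 \<Longrightarrow> real k * pmf \<mu> k = L (real k) / real k"
  using pL[of k] by (simp add: power2_eq_square)

lemma blk_bounds:
  "\<exists>X\<ge>2. \<forall>y\<ge>X. L y / (4 * exp 1) \<le> ell y - ell (2 * y) \<and> ell y - ell (2 * y) \<le> 2 * exp 1 * L y"
proof -
  obtain X where X: "X \<ge> 1" "\<forall>x\<ge>X. \<forall>c\<in>{1..exp (ln 2)}. L (c * x) \<le> exp 1 * L x \<and> L x \<le> exp 1 * L (c * x)"
    using L_unif[of "ln 2"] by auto
  show ?thesis
  proof (intro exI[of _ "max X 2"] conjI allI impI)
    fix y assume y: "max X 2 \<le> y"
    define B where "B = {k::nat. y \<le> real k \<and> real k < 2 * y}"
    have eqs: "ell y - ell (2 * y) = (\<Sum>k\<in>B. real k * pmf \<mu> k)"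
      unfolding B_def using y by (intro ell_diff) auto
    have card: "y - 1 \<le> real (card B)" "real (card B) \<le> y + 1"
      using card_block[of y] y unfolding B_def by auto
    have Lk: "L (real k) \<le> exp 1 * L y \<and> L y \<le> exp 1 * L (real k)" if "k \<in> B" for k
    proof -
      have c: "real k / y \<in> {1..exp (ln 2)}" using that y by (auto simp: B_def field_simps)
      have "real k / y * y = real k" using y by simp
      then show ?thesis using X(2)[rule_format, of y "real k / y"] c y by auto
    qed
    have ypos: "y > 0" using y by simp
    have Ly: "L y > 0" using L_pos ypos by simp
    have up: "real k * pmf \<mu> k \<le> exp 1 * L y / y" if "k \<in> B" for k
    proof -
      have k1: "k \<ge> 1" "real k \<ge> y" "real k > 0" using that y by (auto simp: B_def)
      have "real k * pmf \<mu> k = L (real k) / real k" using kp_eq k1 by simp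
      also have "\<dots> \<le> exp 1 * L y / real k" using Lk[OF that] k1 by (simp add: divide_right_mono)
      also have "\<dots> \<le> exp 1 * L y / y" using k1 ypos Ly by (intro divide_left_mono) auto
      finally show ?thesis .
    qed
    have lo: "L y / exp 1 / (2 * y) \<le> real k * pmf \<mu> k" if "k \<in> B" for k
    proof -
      have k1: "k \<ge> 1" "real k < 2 * y" "real k > 0" using that y by (auto simp: B_def)
      have "L y / exp 1 / (2 * y) \<le> L y / exp 1 / real k"
        using k1 Ly by (intro divide_left_mono) auto
      also have "\<dots> \<le> L (real k) / real k"
        using Lk[OF that] k1 by (intro divide_right_mono) (auto simp: field_simps)
      also have "\<dots> = real k * pmf \<mu> k" using kp_eq k1 by simp
      finally show ?thesis .
    qed
    have "ell y - ell (2 * y) \<le> real (card B) * (exp 1 * L y / y)"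
      unfolding eqs by (rule sum_bounded_above) (rule up)
    also have "\<dots> \<le> (y + 1) * (exp 1 * L y / y)"
      using card Ly ypos by (intro mult_right_mono) auto
    also have "\<dots> \<le> 2 * exp 1 * L y"
      using ypos y Ly by (simp add: field_simps)
    finally show "ell y - ell (2 * y) \<le> 2 * exp 1 * L y" .
    have "L y / (4 * exp 1) \<le> (y - 1) * (L y / exp 1 / (2 * y))"
      using ypos y Ly by (simp add: field_simps)
    also have "\<dots> \<le> real (card B) * (L y / exp 1 / (2 * y))"
      using card Ly ypos by (intro mult_right_mono) auto
    also have "\<dots> \<le> ell y - ell (2 * y)"
      unfolding eqs by (rule sum_bounded_below) (rule lo)
    finally show "L y / (4 * exp 1) \<le> ell y - ell (2 * y)" .
  qed simp
qed


lemma L_over_ell: "((\<lambda>x. L x / ell x) \<longlongrightarrow> 0) at_top"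
proof (rule tendstoI)
  fix \<epsilon> :: real assume e: "\<epsilon> > 0"
  obtain M :: nat where M: "4 * exp 1 * exp 1 / \<epsilon> < real M" using reals_Archimedean2 by blast
  have "0 < 4 * exp 1 * exp 1 / \<epsilon>" using e by simp
  then have M1: "real M > 0" using M by linarith
  obtain XM where XM: "XM \<ge> 1" "\<forall>x\<ge>XM. \<forall>c\<in>{1..exp (real M * ln 2)}. L (c * x) \<le> exp 1 * L x \<and> L x \<le> exp 1 * L (c * x)"
    using L_unif[of "real M * ln 2"] M1 by auto
  obtain X1 where X1: "X1 \<ge> 2" "\<forall>y\<ge>X1. L y / (4 * exp 1) \<le> ell y - ell (2 * y) \<and> ell y - ell (2 * y) \<le> 2 * exp 1 * L y"
    using blk_bounds by auto
  have "\<forall>x\<ge>max XM X1. dist (L x / ell x) 0 < \<epsilon>"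
  proof (intro allI impI)
    fix x assume x: "max XM X1 \<le> x"
    have xpos: "x > 0" using x X1 by simp
    have Lx: "L x > 0" using L_pos xpos by simp
    have trm: "L x / (4 * exp 1 * exp 1) \<le> ell (2^i * x) - ell (2^Suc i * x)" if i: "i < M" for i
    proof -
      have "(2::real)^i \<le> 2^M" using i by (intro power_increasing) auto
      also have "\<dots> = exp (real M * ln 2)" by (simp add: exp_of_nat_mult)
      finally have c: "(2::real)^i \<in> {1..exp (real M * ln 2)}" by auto
      have L1: "L x \<le> exp 1 * L (2^i * x)" using XM(2) c x by auto
      have "1 * x \<le> 2^i * x" using xpos by (intro mult_right_mono) auto
      then have y: "2^i * x \<ge> X1" using x by simp
      have "L (2^i * x) / (4 * exp 1) \<le> ell (2^i * x) - ell (2 * (2^i * x))" using X1(2) y by blast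
      moreover have "L x / (4 * exp 1 * exp 1) \<le> L (2^i * x) / (4 * exp 1)"
        using L1 by (simp add: field_simps)
      ultimately show ?thesis by (simp add: mult.assoc)
    qed
    have "real M * (L x / (4 * exp 1 * exp 1)) \<le> (\<Sum>i<M. ell (2^i * x) - ell (2^Suc i * x))"
      using sum_bounded_below[of "{..<M}" "L x / (4 * exp 1 * exp 1)" "\<lambda>i. ell (2^i * x) - ell (2^Suc i * x)"] trm by simp
    also have "\<dots> = ell x - ell (2^M * x)"
      using sum_lessThan_telescope'[of "\<lambda>i. ell (2^i * x)" M] by simp
    also have "\<dots> < ell x" using ell_pos by simp
    finally have "real M * L x < 4 * exp 1 * exp 1 * ell x" by (simp add: field_simps)
    then have "L x / ell x < 4 * exp 1 * exp 1 / real M"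
      using M1 ell_pos[of x] by (simp add: field_simps)
    also have "\<dots> < \<epsilon>" using M e M1 by (simp add: field_simps)
    finally show "dist (L x / ell x) 0 < \<epsilon>" using Lx ell_pos[of x] by simp
  qed
  then show "\<forall>\<^sub>F x in at_top. dist (L x / ell x) 0 < \<epsilon>"
    unfolding eventually_at_top_linorder by blast
qed

lemma ell_double: assumes "\<delta> > 0" shows "eventually (\<lambda>x. ell x - ell (2 * x) \<le> \<delta> * ell x) at_top"
proof -
  obtain X1 where X1: "X1 \<ge> 2" "\<forall>y\<ge>X1. L y / (4 * exp 1) \<le> ell y - ell (2 * y) \<and> ell y - ell (2 * y) \<le> 2 * exp 1 * L y"
    using blk_bounds by auto
  have "eventually (\<lambda>x. dist (L x / ell x) 0 < \<delta> / (2 * exp 1)) at_top"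
    using tendstoD[OF L_over_ell, of "\<delta> / (2 * exp 1)"] assms by simp
  moreover have "eventually (\<lambda>x. x \<ge> X1) at_top" by simp
  ultimately show ?thesis
  proof eventually_elim
    case (elim x)
    have "x > 0" using elim X1 by simp
    then have "L x < \<delta> / (2 * exp 1) * ell x" using elim(1) ell_pos[of x] L_pos[of x]
      by (simp add: field_simps)
    then have "2 * exp 1 * L x \<le> \<delta> * ell x" by (simp add: field_simps)
    then show ?case using X1(2) elim(2) by (meson order_trans)
  qed
qed

lemma ell_pow2: assumes "\<delta> > 0" shows "eventually (\<lambda>x. (1 - \<delta>) * ell x \<le> ell (2^j * x)) at_top"
  using assms
proof (induction j arbitrary: \<delta>)
  case 0
  have "(1 - \<delta>) * ell x \<le> ell x" for x
    using ell_pos[of x] 0 by (simp add: algebra_simps)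
  then show ?case by simp
next
  case (Suc j)
  have d2: "\<delta>/2 > 0" using Suc by simp
  have ev1: "eventually (\<lambda>x. (1 - \<delta>/2) * ell x \<le> ell (2^j * x)) at_top" by (rule Suc.IH[OF d2])
  have lim: "filterlim (\<lambda>x::real. 2^j * x) at_top at_top"
    by (intro filterlim_tendsto_pos_mult_at_top[OF tendsto_const]) (auto simp: filterlim_ident)
  have ev2: "eventually (\<lambda>x. ell (2^j * x) - ell (2 * (2^j * x)) \<le> \<delta>/2 * ell (2^j * x)) at_top"
    using filterlim_iff[THEN iffD1, OF lim, rule_format, OF ell_double[OF d2]] .
  from ev1 ev2 show ?case
  proof eventually_elim
    case (elim x)
    have p: "0 < ell (2^j * x)" "0 < ell x" by (rule ell_pos)+
    have q: "(1 - \<delta>) \<le> (1 - \<delta>/2) * (1 - \<delta>/2)"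
      using mult_nonneg_nonneg[of \<delta> \<delta>] Suc.prems by (simp add: algebra_simps)
    have "(1 - \<delta>) * ell x \<le> ((1 - \<delta>/2) * (1 - \<delta>/2)) * ell x"
      using p by (intro mult_right_mono[OF q]) auto
    also have "\<dots> = (1 - \<delta>/2) * ((1 - \<delta>/2) * ell x)" by simp
    also have "\<dots> \<le> (1 - \<delta>/2) * ell (2^j * x)" if "\<delta> \<le> 2"
      using elim(1) that by (intro mult_left_mono) auto
    finally have a: "\<delta> \<le> 2 \<Longrightarrow> (1 - \<delta>) * ell x \<le> (1 - \<delta>/2) * ell (2^j * x)" .
    have b: "(1 - \<delta>/2) * ell (2^j * x) \<le> ell (2^Suc j * x)" using elim(2) by (simp add: algebra_simps)
    show ?case
    proof (cases "\<delta> \<le> 2")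
      case True then show ?thesis using a b by linarith
    next
      case False
      then have "(1 - \<delta>) * ell x \<le> 0" using p by (simp add: mult_nonpos_nonneg)
      then show ?thesis using ell_pos[of "2^Suc j * x"] by linarith
    qed
  qed
qed

lemma ell_sv: assumes "K \<ge> 1" "\<delta> > 0" shows "eventually (\<lambda>x. (1 - \<delta>) * ell x \<le> ell (K * x)) at_top"
proof -
  obtain j :: nat where j: "K < 2^j" using real_arch_pow[of 2 K] by auto
  from ell_pow2[OF assms(2), of j] eventually_gt_at_top[of 0]
  show ?thesis
  proof eventually_elim
    case (elim x)
    have "ell (2^j * x) \<le> ell (K * x)" using j elim(2) by (intro ell_mono) simp
    then show ?case using elim(1) by linarith
  qed
qed

end

lemma contract_lim:
  fixes a :: "nat \<Rightarrow> real"
  assumes nn: "\<And>j. 0 \<le> a j"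
    and rec: "\<And>\<epsilon>. \<epsilon> > 0 \<Longrightarrow> eventually (\<lambda>j. a (Suc j) \<le> 0.6 * a j + \<epsilon>) sequentially"
  shows "a \<longlonglongrightarrow> 0"
proof (rule tendstoI)
  fix \<epsilon> :: real assume e: "\<epsilon> > 0"
  obtain j0 where j0: "\<And>j. j \<ge> j0 \<Longrightarrow> a (Suc j) \<le> 0.6 * a j + \<epsilon>/5"
    using rec[of "\<epsilon>/5"] e unfolding eventually_sequentially by auto
  have claim: "a (j0 + n) \<le> 0.6^n * a j0 + \<epsilon>/2" for n
  proof (induction n)
    case 0 then show ?case using e by simp
  next
    case (Suc n)
    have "a (j0 + Suc n) \<le> 0.6 * a (j0 + n) + \<epsilon>/5" using j0[of "j0 + n"] by simp
    also have "\<dots> \<le> 0.6 * (0.6^n * a j0 + \<epsilon>/2) + \<epsilon>/5" using Suc by simp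
    also have "\<dots> = 0.6^Suc n * a j0 + \<epsilon>/2" by (simp add: algebra_simps)
    finally show ?case .
  qed
  have "(\<lambda>n. (0.6::real)^n * a j0) \<longlonglongrightarrow> 0 * a j0"
    by (intro tendsto_mult tendsto_const LIMSEQ_power_zero) simp
  then have "eventually (\<lambda>n. (0.6::real)^n * a j0 < \<epsilon>/2) sequentially"
    using e by (intro order_tendstoD(2)) auto
  then obtain n0 where n0: "\<And>n. n \<ge> n0 \<Longrightarrow> (0.6::real)^n * a j0 < \<epsilon>/2"
    unfolding eventually_sequentially by blast
  have "a j < \<epsilon>" if "j \<ge> j0 + n0" for j
  proof -
    define n where "n = j - j0"
    have n: "j = j0 + n" "n \<ge> n0" using that unfolding n_def by auto
    show ?thesis using claim[of n] n0[OF n(2)] n(1) by simp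
  qed
  then show "eventually (\<lambda>j. dist (a j) 0 < \<epsilon>) sequentially"
    unfolding eventually_sequentially dist_real_def using nn by (intro exI[of _ "j0 + n0"]) auto
qed

context crit begin

definition S2 :: "real \<Rightarrow> real" where
  "S2 x = (\<Sum>k\<in>{k::nat. real k < x}. (real k)^2 * pmf \<mu> k)"

lemma fin_lt: "finite {k::nat. real k < x}"
proof (rule finite_subset[of _ "{..<nat \<lceil>x\<rceil>}"])
  show "{k::nat. real k < x} \<subseteq> {..<nat \<lceil>x\<rceil>}"
  proof
    fix k assume "k \<in> {k::nat. real k < x}"
    then have "int k < \<lceil>x\<rceil>" by (simp add: less_ceiling_iff)
    then show "k \<in> {..<nat \<lceil>x\<rceil>}" by simp
  qed
qed simp

lemma S2_nonneg: "0 \<le> S2 x"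
  unfolding S2_def by (intro sum_nonneg) (simp add: pmf_nonneg)

lemma S2_mono: "x \<le> y \<Longrightarrow> S2 x \<le> S2 y"
  unfolding S2_def by (intro sum_mono2 fin_lt) (auto simp: pmf_nonneg)

lemma S2_step: assumes y: "y \<ge> 1" shows "S2 (2 * y) \<le> S2 y + 2 * y * (ell y - ell (2 * y))"
proof -
  have un: "{k::nat. real k < 2 * y} = {k. real k < y} \<union> {k. y \<le> real k \<and> real k < 2 * y}" using y by auto
  have fb: "finite {k::nat. y \<le> real k \<and> real k < 2 * y}"
    by (rule finite_subset[OF _ fin_lt[of "2*y"]]) auto
  have "S2 (2 * y) = S2 y + (\<Sum>k\<in>{k. y \<le> real k \<and> real k < 2 * y}. (real k)^2 * pmf \<mu> k)"
    unfolding S2_def un by (rule sum.union_disjoint) (auto simp: fin_lt fb)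
  also have "(\<Sum>k\<in>{k. y \<le> real k \<and> real k < 2 * y}. (real k)^2 * pmf \<mu> k)
     \<le> (\<Sum>k\<in>{k. y \<le> real k \<and> real k < 2 * y}. 2 * y * (real k * pmf \<mu> k))"
  proof (rule sum_mono)
    fix k assume "k \<in> {k. y \<le> real k \<and> real k < 2 * y}"
    then have "real k \<le> 2 * y" by simp
    then have "real k * (real k * pmf \<mu> k) \<le> 2 * y * (real k * pmf \<mu> k)"
      by (intro mult_right_mono) (auto simp: pmf_nonneg)
    then show "(real k)^2 * pmf \<mu> k \<le> 2 * y * (real k * pmf \<mu> k)"
      by (simp add: power2_eq_square mult.assoc)
  qed
  also have "\<dots> = 2 * y * (ell y - ell (2 * y))"
    using ell_diff[of y "2*y"] y by (simp add: sum_distrib_left)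
  finally show ?thesis by simp
qed

definition R :: "nat \<Rightarrow> real" where "R j = S2 (2^j) / (2^j * ell (2^j))"

lemma R_nonneg: "0 \<le> R j"
  unfolding R_def using S2_nonneg ell_pos by (intro divide_nonneg_pos) auto

lemma R_lim: "R \<longlonglongrightarrow> 0"
proof (rule contract_lim[OF R_nonneg])
  fix \<epsilon> :: real assume e: "\<epsilon> > 0"
  define \<delta> where "\<delta> = min (1/10) (\<epsilon>/2)"
  have d: "\<delta> > 0" "\<delta> \<le> 1/10" "\<delta> \<le> \<epsilon>/2" using e unfolding \<delta>_def by auto
  have "filterlim (\<lambda>j::nat. (2::real)^j) at_top sequentially"
  proof (rule filterlim_at_top_mono[OF filterlim_real_sequentially], intro always_eventually allI)
    fix j :: nat have "j < 2^j" by (rule less_exp)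
    then have "real j < real (2^j)" by (simp only: of_nat_less_iff)
    then show "real j \<le> 2^j" by simp
  qed
  from filterlim_iff[THEN iffD1, OF this, rule_format, OF ell_double[OF d(1)]]
  show "eventually (\<lambda>j. R (Suc j) \<le> 0.6 * R j + \<epsilon>) sequentially"
  proof eventually_elim
    case (elim j)
    define y :: real where "y = 2^j"
    have y1: "y \<ge> 1" unfolding y_def by simp
    have ey: "ell y > 0" "ell (2*y) > 0" by (rule ell_pos)+
    have h: "ell y - ell (2 * y) \<le> \<delta> * ell y" using elim unfolding y_def by simp
    have "\<delta> * ell y \<le> 1/10 * ell y" using d ey by (intro mult_right_mono) auto
    then have e2: "0.9 * ell y \<le> ell (2*y)" using h by linarith
    have st: "S2 (2 * y) \<le> S2 y + 2 * y * (ell y - ell (2 * y))" by (rule S2_step[OF y1])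
    have "R (Suc j) = S2 (2 * y) / (2 * y * ell (2 * y))" unfolding R_def y_def by simp
    also have "\<dots> \<le> (S2 y + 2 * y * (ell y - ell (2 * y))) / (2 * y * ell (2 * y))"
      using st y1 ey by (intro divide_right_mono) auto
    also have "\<dots> = S2 y / (y * ell y) * (ell y / (2 * ell (2 * y))) + (ell y - ell (2 * y)) / ell (2 * y)"
      using y1 ey by (simp add: field_simps)
    also have "\<dots> \<le> R j * 0.6 + \<epsilon>"
    proof (rule add_mono)
      have "ell y / (2 * ell (2 * y)) \<le> 0.6" using e2 ey by (simp add: field_simps)
      then show "S2 y / (y * ell y) * (ell y / (2 * ell (2 * y))) \<le> R j * 0.6"
        using R_nonneg[of j] unfolding R_def y_def[symmetric] by (intro mult_left_mono) auto
      have "(ell y - ell (2 * y)) / ell (2 * y) \<le> \<delta> * ell y / ell (2 * y)"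
        using h ey by (intro divide_right_mono) auto
      also have "\<dots> \<le> \<epsilon>"
      proof -
        have a: "\<delta> * ell y \<le> \<epsilon>/2 * ell y" using d ey by (intro mult_right_mono) auto
        have b: "ell y \<le> 10/9 * ell (2*y)" using e2 by linarith
        have c: "\<epsilon>/2 * ell y \<le> \<epsilon>/2 * (10/9 * ell (2*y))" using b e by (intro mult_left_mono) auto
        have eq: "\<epsilon>/2 * (10/9 * ell (2*y)) = 5/9 * (\<epsilon> * ell (2*y))" by simp
        have "0 \<le> \<epsilon> * ell (2*y)" using e ey by simp
        then have "\<delta> * ell y \<le> \<epsilon> * ell (2*y)" using a c eq by linarith
        then show ?thesis using ey by (simp add: field_simps)
      qed
      finally show "(ell y - ell (2 * y)) / ell (2 * y) \<le> \<epsilon>" .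
    qed
    finally show ?case by simp
  qed
qed

end

context crit begin

lemma S2_ratio: "((\<lambda>x. S2 x / (x * ell x)) \<longlongrightarrow> 0) at_top"
proof (rule tendstoI)
  fix \<epsilon> :: real assume e: "\<epsilon> > 0"
  have "eventually (\<lambda>j. R j < \<epsilon>/2) sequentially"
    using R_lim e by (intro order_tendstoD(2)) auto
  then obtain J where J: "\<And>j. j \<ge> J \<Longrightarrow> R j < \<epsilon>/2" unfolding eventually_sequentially by blast
  have "dist (S2 x / (x * ell x)) 0 < \<epsilon>" if x: "x \<ge> 2^J" for x
  proof -
    have x1: "x \<ge> 1" using x by (smt (verit) one_le_power)
    define n where "n = nat \<lfloor>x\<rfloor>"
    have n1: "n \<ge> 1" unfolding n_def using x1 by linarith
    obtain j where j: "2^j \<le> n" "n < 2^(j+1)" using ex_power_ivl1[of 2 n] n1 by auto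
    have nx: "real n \<le> x" "x < real n + 1" unfolding n_def using x1 by linarith+
    have jx: "2^j \<le> x" using j(1) nx by (metis of_nat_le_iff of_nat_numeral of_nat_power order_trans)
    have jx2: "x < 2^(j+1)"
    proof -
      have "real n + 1 \<le> real (2^(j+1))" using j(2) by linarith
      then show ?thesis using nx by simp
    qed
    have jJ: "Suc j \<ge> J"
    proof (rule ccontr)
      assume "\<not> Suc j \<ge> J"
      then have "(2::real)^(j+1) \<le> 2^J" by (intro power_increasing) auto
      then show False using x jx2 by linarith
    qed
    have pos: "0 < x * ell x" using x1 ell_pos[of x] by simp
    have "S2 x / (x * ell x) \<le> S2 (2^(j+1)) / (2^j * ell (2^(j+1)))"
    proof (rule frac_le)
      show "0 \<le> S2 (2^(j+1))" by (rule S2_nonneg)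
      show "S2 x \<le> S2 (2^(j+1))" using jx2 by (intro S2_mono) simp
      show "0 < 2^j * ell (2^(j+1))" using ell_pos by simp
      show "2^j * ell (2^(j+1)) \<le> x * ell x"
        using jx jx2 ell_pos less_imp_le[OF ell_pos] by (intro mult_mono ell_mono) auto
    qed
    also have "\<dots> = 2 * R (Suc j)" unfolding R_def using ell_pos by (simp add: field_simps)
    also have "\<dots> < \<epsilon>" using J[OF jJ] by simp
    finally show ?thesis using pos S2_nonneg[of x] by simp
  qed
  then show "eventually (\<lambda>x. dist (S2 x / (x * ell x)) 0 < \<epsilon>) at_top"
    unfolding eventually_at_top_linorder by blast
qed

lemma D_upper: assumes u: "0 < u" "u \<le> 1"
  shows "D u \<le> u^2 * S2 (1/u) + u * ell (1/u)"
proof -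
  have T1: "(\<lambda>k. if k \<in> {k. real k < 1/u} then u^2 * ((real k)^2 * pmf \<mu> k) else 0) sums (u^2 * S2 (1/u))"
    using sums_If_finite_set[OF fin_lt[of "1/u"], of "\<lambda>k. u^2 * ((real k)^2 * pmf \<mu> k)"]
    unfolding S2_def by (simp add: sum_distrib_left)
  have T2: "(\<lambda>k. u * (if 1/u \<le> real k then real k * pmf \<mu> k else 0)) sums (u * ell (1/u))"
    unfolding ell_def by (intro sums_mult summable_sums ell_summable)
  show ?thesis
  proof (rule sums_le[OF _ D_sums sums_add[OF T1 T2]])
    fix k
    show "pmf \<mu> k * gg u k \<le> (if k \<in> {k. real k < 1/u} then u^2 * ((real k)^2 * pmf \<mu> k) else 0) +
       u * (if 1/u \<le> real k then real k * pmf \<mu> k else 0)"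
    proof (cases "real k < 1/u")
      case True
      have "pmf \<mu> k * gg u k \<le> pmf \<mu> k * ((real k)^2 * u^2)"
        using gg_le_sq[of u k] u by (intro mult_left_mono) (auto simp: pmf_nonneg)
      then show ?thesis using True by (simp add: algebra_simps)
    next
      case False
      have "pmf \<mu> k * gg u k \<le> pmf \<mu> k * (real k * u)"
        using gg_le_ku[of u k] u by (intro mult_left_mono) (auto simp: pmf_nonneg)
      then show ?thesis using False by (simp add: algebra_simps)
    qed
  qed (use u in auto)
qed

lemma D_lower: assumes u: "0 < u" "u \<le> 1" and K: "K \<ge> 1"
  shows "(1 - 1/K) * u * ell (K/u) \<le> D u"
proof -
  have T: "(\<lambda>k. (1 - 1/K) * u * (if K/u \<le> real k then real k * pmf \<mu> k else 0)) sums ((1 - 1/K) * u * ell (K/u))"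
    unfolding ell_def by (intro sums_mult summable_sums ell_summable)
  show ?thesis
  proof (rule sums_le[OF _ T D_sums])
    fix k
    show "(1 - 1/K) * u * (if K/u \<le> real k then real k * pmf \<mu> k else 0) \<le> pmf \<mu> k * gg u k"
    proof (cases "K/u \<le> real k")
      case True
      have ku: "K \<le> real k * u" using True u by (simp add: field_simps)
      have "1 \<le> real k * u / K" using ku K by (simp add: field_simps)
      then have "(1 - 1/K) * (real k * u) \<le> real k * u - 1"
        using K by (simp add: field_simps)
      also have "\<dots> \<le> gg u k" using gg_ge[of u k] u by simp
      finally have "pmf \<mu> k * ((1 - 1/K) * (real k * u)) \<le> pmf \<mu> k * gg u k"
        by (intro mult_left_mono) (auto simp: pmf_nonneg)
      then show ?thesis using True by (simp add: algebra_simps)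
    next
      case False
      then show ?thesis using gg_nonneg[of u k] u by (simp add: pmf_nonneg)
    qed
  qed (use u in auto)
qed


lemma D_asym: assumes d: "\<delta> > 0"
  shows "\<exists>u0>0. u0 \<le> 1 \<and> (\<forall>u. 0 < u \<and> u \<le> u0 \<longrightarrow>
           (1 - \<delta>) * u * ell (1/u) \<le> D u \<and> D u \<le> (1 + \<delta>) * u * ell (1/u))"
proof -
  define d' where "d' = min \<delta> 1"
  have d': "0 < d'" "d' \<le> \<delta>" "d' \<le> 1" using d unfolding d'_def by auto
  define K where "K = 2 / d'"
  have K: "K \<ge> 1" "1 / K = d'/2" using d' unfolding K_def by (auto simp: field_simps)
  have ev1: "eventually (\<lambda>x. (1 - d'/2) * ell x \<le> ell (K * x)) at_top"
    using ell_sv[OF K(1)] d' by simp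
  have ev2: "eventually (\<lambda>x. S2 x / (x * ell x) < \<delta>) at_top"
    using S2_ratio d by (intro order_tendstoD(2)) auto
  obtain X where X: "\<And>x. x \<ge> X \<Longrightarrow> (1 - d'/2) * ell x \<le> ell (K * x) \<and> S2 x / (x * ell x) < \<delta>"
    using eventually_conj[OF ev1 ev2] unfolding eventually_at_top_linorder by blast
  define X' where "X' = max X 1"
  show ?thesis
  proof (intro exI[of _ "1 / X'"] conjI allI impI)
    show "0 < 1 / X'" "1 / X' \<le> 1" unfolding X'_def by auto
    fix u assume u: "0 < u \<and> u \<le> 1 / X'"
    define x where "x = 1 / u"
    have X'p: "X' \<ge> 1" unfolding X'_def by simp
    have uX: "u * X' \<le> 1" using u X'p by (simp add: le_divide_eq)
    have "u * 1 \<le> u * X'" using u X'p by (intro mult_left_mono) auto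
    then have u1: "u \<le> 1" using uX by simp
    have xX: "x \<ge> X'" unfolding x_def using uX u by (simp add: le_divide_eq mult.commute)
    then have xX1: "x \<ge> X" "x \<ge> 1" unfolding X'_def by auto
    have ux: "u * x = 1" unfolding x_def using u by simp
    have ex: "ell x > 0" "ell (K * x) > 0" by (rule ell_pos)+
    have "(1 - \<delta>) * u * ell (1/u) \<le> (1 - d'/2) * u * ((1 - d'/2) * ell x)"
    proof -
      have q0: "0 \<le> d' * d' / 4" using d' by simp
      have q: "1 - \<delta> \<le> (1 - d'/2) * (1 - d'/2)"
      proof -
        have "(1 - d'/2) * (1 - d'/2) = 1 - d' + d' * d' / 4" by (simp add: algebra_simps)
        then show ?thesis using q0 d' by linarith
      qed
      have "(1 - \<delta>) * (u * ell x) \<le> ((1 - d'/2) * (1 - d'/2)) * (u * ell x)"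
        using u ex by (intro mult_right_mono[OF q]) auto
      moreover have "(1 - d'/2) * u * ((1 - d'/2) * ell x) = ((1 - d'/2) * (1 - d'/2)) * (u * ell x)"
        by (simp add: mult_ac)
      moreover have "(1 - \<delta>) * u * ell (1/u) = (1 - \<delta>) * (u * ell x)" unfolding x_def by (simp add: mult_ac)
      ultimately show ?thesis by (simp only:)
    qed
    also have "\<dots> \<le> (1 - d'/2) * u * ell (K * x)"
      using X[OF xX1(1)] u d' by (intro mult_left_mono) auto
    also have "\<dots> = (1 - 1/K) * u * ell (K / u)" using K unfolding x_def by simp
    also have "\<dots> \<le> D u" using D_lower[OF _ u1 K(1)] u by simp
    finally show "(1 - \<delta>) * u * ell (1/u) \<le> D u" .
    have "S2 x < \<delta> * (x * ell x)" using X[OF xX1(1)] ex xX1 by (simp add: field_simps)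
    then have "u^2 * S2 x \<le> u^2 * (\<delta> * (x * ell x))" using u by (intro mult_left_mono) auto
    also have "\<dots> = \<delta> * u * ell x * (u * x)" by (simp add: power2_eq_square algebra_simps)
    also have "\<dots> = \<delta> * u * ell x" using ux by simp
    finally have a: "u^2 * S2 x \<le> \<delta> * u * ell x" .
    have "D u \<le> u^2 * S2 x + u * ell x" using D_upper[OF _ u1] u unfolding x_def by simp
    also have "\<dots> \<le> (1 + \<delta>) * u * ell (1/u)" using a unfolding x_def by (simp add: algebra_simps)
    finally show "D u \<le> (1 + \<delta>) * u * ell (1/u)" .
  qed
qed

end

context crit begin

definition gI :: "real \<Rightarrow> real" where "gI x = 1 / (x * trunc_mean \<mu> x)"

definition Phi :: "real \<Rightarrow> real" where "Phi y = (LBINT x=1..y. gI x)"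

lemma gI_eq: "gI x = 1 / (x * ell x)" unfolding gI_def trunc_mean_eq ..

lemma ell_meas[measurable]: "ell \<in> borel_measurable borel"
proof -
  have "mono (\<lambda>x. - ell x)" by (auto simp: mono_def intro: ell_mono)
  then have "(\<lambda>x. - ell x) \<in> borel_measurable borel" by (rule borel_measurable_mono)
  then have "(\<lambda>x. - (- ell x)) \<in> borel_measurable borel" by measurable
  then show ?thesis by simp
qed

lemma gI_meas[measurable]: "gI \<in> borel_measurable borel"
  unfolding gI_eq[abs_def] by measurable

lemma gI_set_integrable:
  assumes a: "1 \<le> a" and A: "A \<subseteq> {a..b}" "A \<in> sets lborel"
  shows "set_integrable lborel A gI"
  unfolding set_integrable_def
proof (rule integrableI_bounded_set_indicator[where B="1 / (a * ell b)"])
  show "A \<in> sets lborel" by fact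
  show "gI \<in> borel_measurable lborel" by simp
  have "emeasure lborel A \<le> emeasure lborel {a..b}" using A by (intro emeasure_mono) auto
  also have "\<dots> < \<infinity>" by (simp add: emeasure_lborel_Icc_eq)
  finally show "emeasure lborel A < \<infinity>" .
  show "AE x in lborel. x \<in> A \<longrightarrow> norm (gI x) \<le> 1 / (a * ell b)"
  proof (intro always_eventually allI impI)
    fix x assume x: "x \<in> A"
    then have xab: "a \<le> x" "x \<le> b" using A by auto
    have p: "0 < a * ell b" "0 < x * ell x" using a xab ell_pos by auto
    have "a * ell b \<le> x * ell x" using xab a ell_pos less_imp_le[OF ell_pos] by (intro mult_mono ell_mono) auto
    then have "1 / (x * ell x) \<le> 1 / (a * ell b)" using p by (intro divide_left_mono) auto
    then show "norm (gI x) \<le> 1 / (a * ell b)" using p by (simp add: gI_eq)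
  qed
qed

lemma gI_interval_integrable:
  assumes "1 \<le> a" "a \<le> b"
  shows "interval_lebesgue_integrable lborel (ereal a) (ereal b) gI"
  unfolding interval_lebesgue_integrable_def using assms
  by (auto intro!: gI_set_integrable[where a=a and b=b])

lemma Phi_add: assumes "1 \<le> y" "y \<le> z"
  shows "Phi z = Phi y + (LBINT x=y..z. gI x)"
proof -
  have e1: "(1::ereal) = ereal 1" by simp
  have "(LBINT x=1..ereal y. gI x) + (LBINT x=ereal y..ereal z. gI x) = (LBINT x=1..ereal z. gI x)"
  proof (rule interval_integral_sum)
    have "interval_lebesgue_integrable lborel (ereal 1) (ereal z) gI"
      using assms by (intro gI_interval_integrable) auto
    moreover have "min 1 (min (ereal y) (ereal z)) = ereal 1" "max 1 (max (ereal y) (ereal z)) = ereal z"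
      using assms by (auto simp: min_def max_def e1)
    ultimately show "interval_lebesgue_integrable lborel (min 1 (min (ereal y) (ereal z))) (max 1 (max (ereal y) (ereal z))) gI"
      by simp
  qed
  then show ?thesis unfolding Phi_def by simp
qed

lemma int_inv: assumes "0 < y" "y \<le> z"
  shows "(LBINT x=y..z. 1 / x) = ln z - ln y"
proof (rule interval_integral_FTC_finite)
  show "continuous_on {min y z..max y z} (\<lambda>x. 1 / x)"
    using assms by (intro continuous_intros) auto
  fix x assume x: "min y z \<le> x" "x \<le> max y z"
  then have "x > 0" using assms by auto
  then have "(ln has_real_derivative 1 / x) (at x)" by (rule DERIV_ln_divide)
  then show "(ln has_vector_derivative 1 / x) (at x within {min y z..max y z})"
    by (simp add: has_real_derivative_iff_has_vector_derivative has_vector_derivative_at_within)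
qed

lemma Phi_bounds: assumes yz: "1 \<le> y" "y \<le> z"
  shows "(ln z - ln y) / ell y \<le> Phi z - Phi y \<and> Phi z - Phi y \<le> (ln z - ln y) / ell z"
proof -
  have eq: "Phi z - Phi y = (LBINT x:{y..z}. gI x)"
    using Phi_add[OF yz] interval_integral_Icc[OF yz(2)] by simp
  have si: "set_integrable lborel {y..z} gI" using yz by (intro gI_set_integrable[where a=y and b=z]) auto
  have ci: "set_integrable lborel {y..z} (\<lambda>x. 1 / x)"
    using yz by (intro borel_integrable_atLeastAtMost' continuous_intros) auto
  have inv: "(LBINT x:{y..z}. 1 / x) = ln z - ln y"
    using int_inv[of y z] yz interval_integral_Icc[OF yz(2), of "\<lambda>x. 1 / x"] by simp
  have "(LBINT x:{y..z}. gI x) \<le> (LBINT x:{y..z}. (1 / ell z) * (1 / x))"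
  proof (rule set_integral_mono[OF si])
    show "set_integrable lborel {y..z} (\<lambda>x. (1 / ell z) * (1 / x))" using ci by (rule set_integrable_mult_right)
    fix x assume x: "x \<in> {y..z}"
    then have p: "0 < x" "ell z \<le> ell x" "0 < ell z" using yz by (auto intro: ell_mono ell_pos)
    have "1 / (x * ell x) \<le> 1 / (x * ell z)" using p by (intro divide_left_mono mult_left_mono) auto
    then show "gI x \<le> (1 / ell z) * (1 / x)" by (simp add: gI_eq mult.commute)
  qed
  also have "\<dots> = (1 / ell z) * (LBINT x:{y..z}. 1 / x)" by (rule set_integral_mult_right)
  also have "\<dots> = (ln z - ln y) / ell z" using inv by simp
  finally have up: "Phi z - Phi y \<le> (ln z - ln y) / ell z" using eq by simp
  have "(ln z - ln y) / ell y = (1 / ell y) * (LBINT x:{y..z}. 1 / x)" using inv by simp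
  also have "\<dots> = (LBINT x:{y..z}. (1 / ell y) * (1 / x))" by (rule set_integral_mult_right[symmetric])
  also have "\<dots> \<le> (LBINT x:{y..z}. gI x)"
  proof (rule set_integral_mono[OF _ si])
    show "set_integrable lborel {y..z} (\<lambda>x. (1 / ell y) * (1 / x))" using ci by (rule set_integrable_mult_right)
    fix x assume x: "x \<in> {y..z}"
    then have p: "0 < x" "ell x \<le> ell y" "0 < ell x" using yz by (auto intro: ell_mono ell_pos)
    have "1 / (x * ell y) \<le> 1 / (x * ell x)" using p by (intro divide_left_mono mult_left_mono mult_pos_pos) auto
    then show "(1 / ell y) * (1 / x) \<le> gI x" by (simp add: gI_eq mult.commute)
  qed
  finally have lo: "(ln z - ln y) / ell y \<le> Phi z - Phi y" using eq by simp
  show ?thesis using up lo by simp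
qed

lemma Phi_1: "Phi 1 = 0"
proof -
  have e1: "(1::ereal) = ereal 1" by simp
  show ?thesis unfolding Phi_def by (subst e1) (rule interval_integral_endpoints_same)
qed

lemma Phi_nonneg: "1 \<le> y \<Longrightarrow> 0 \<le> Phi y"
  using Phi_bounds[of 1 y] Phi_1 ell_pos[of 1] by (smt (verit) divide_nonneg_pos ln_ge_zero ln_one)

lemma Phi_mono: "1 \<le> y \<Longrightarrow> y \<le> z \<Longrightarrow> Phi y \<le> Phi z"
  using Phi_bounds[of y z] ell_pos[of y]
  by (smt (verit) divide_nonneg_pos ln_le_cancel_iff)

end

context crit begin

lemma step_bounds:
  assumes d: "0 < \<delta>" "\<delta> \<le> 1/10"
    and u: "0 < u" "u \<le> 1" and v: "0 < v" "v = u - D u"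
    and Dl: "(1 - \<delta>) * u * ell (1/u) \<le> D u" and Du: "D u \<le> (1 + \<delta>) * u * ell (1/u)"
    and small: "ell (1/u) \<le> \<delta>" and sv: "(1 - \<delta>) * ell (1/u) \<le> ell (2 * (1/u))"
  shows "1 - \<delta> \<le> Phi (1/v) - Phi (1/u) \<and> Phi (1/v) - Phi (1/u) \<le> (1 + \<delta>) / ((1 - 2*\<delta>) * (1 - \<delta>))"
proof -
  define l where "l = ell (1/u)"
  have lp: "l > 0" unfolding l_def by (rule ell_pos)
  have vu: "v \<le> u" using v D_nonneg[of u] u by simp
  have y1: "1 \<le> 1/u" using u by simp
  have yz: "1/u \<le> 1/v" using vu v by (simp add: frac_le)
  have lnd: "ln (1/v) - ln (1/u) = ln u - ln v" using u v by (simp add: ln_div)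
  have Dle: "D u \<le> 2 * \<delta> * u"
  proof -
    have "(1 + \<delta>) * u * l \<le> (1 + \<delta>) * u * \<delta>" using small d u unfolding l_def by (intro mult_left_mono) auto
    also have "\<dots> = (\<delta> * u) * (1 + \<delta>)" by (simp add: mult_ac)
    also have "\<dots> \<le> (\<delta> * u) * 2" using d u by (intro mult_left_mono) auto
    also have "\<dots> = 2 * \<delta> * u" by (simp add: mult_ac)
    finally show ?thesis using Du unfolding l_def by simp
  qed
  have vlow: "(1 - 2*\<delta>) * u \<le> v" using Dle v by (simp add: algebra_simps)
  have d2: "0 < 1 - 2*\<delta>" "0 < 1 - \<delta>" using d by auto
  have v2: "1/v \<le> 2 * (1/u)"
  proof -
    have "0 \<le> (1/2 - 2*\<delta>) * u" using d u by (intro mult_nonneg_nonneg) auto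
    moreover have "(1/2 - 2*\<delta>) * u = (1 - 2*\<delta>) * u - u / 2" by (simp add: algebra_simps)
    ultimately have "u / 2 \<le> v" using vlow by linarith
    then show ?thesis using u v by (simp add: field_simps)
  qed
  have ez: "(1 - \<delta>) * l \<le> ell (1/v)"
    using sv ell_mono[OF v2] unfolding l_def by linarith
  have ezp: "ell (1/v) > 0" by (rule ell_pos)
  note B = Phi_bounds[OF y1 yz]
  have lnlow: "D u / u \<le> ln u - ln v"
  proof -
    have "ln (v / u) \<le> v / u - 1" using u v by (intro ln_le_minus_one) auto
    then have "ln v - ln u \<le> v / u - 1" using u v by (simp add: ln_div)
    moreover have "v / u - 1 = - (D u / u)" using u unfolding v(2) by (simp add: field_simps)
    ultimately show ?thesis by simp
  qed
  have "1 - \<delta> \<le> D u / (u * l)" using Dl lp u by (simp add: field_simps l_def)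
  also have "\<dots> = (D u / u) / l" by simp
  also have "\<dots> \<le> (ln u - ln v) / l" using lnlow lp by (intro divide_right_mono) auto
  also have "\<dots> \<le> Phi (1/v) - Phi (1/u)" using B lnd unfolding l_def by simp
  finally have lo: "1 - \<delta> \<le> Phi (1/v) - Phi (1/u)" .
  have lnup: "ln u - ln v \<le> D u / v"
  proof -
    have "ln (u / v) \<le> u / v - 1" using u v by (intro ln_le_minus_one) auto
    then have "ln u - ln v \<le> u / v - 1" using u v by (simp add: ln_div)
    moreover have "u / v - 1 = D u / v" using v by (simp add: field_simps)
    ultimately show ?thesis by simp
  qed
  have "Phi (1/v) - Phi (1/u) \<le> (ln u - ln v) / ell (1/v)" using B lnd by simp
  also have "\<dots> \<le> (D u / v) / ell (1/v)" using lnup ezp by (intro divide_right_mono) auto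
  also have "\<dots> \<le> ((1 + \<delta>) * u * l / ((1 - 2*\<delta>) * u)) / ((1 - \<delta>) * l)"
  proof (rule frac_le)
    show "0 \<le> (1 + \<delta>) * u * l / ((1 - 2 * \<delta>) * u)" using d d2 u lp by simp
    show "D u / v \<le> (1 + \<delta>) * u * l / ((1 - 2 * \<delta>) * u)"
      using Du vlow d2 u v D_nonneg[of u] unfolding l_def
      by (intro frac_le[where x="D u"]) auto
    show "0 < (1 - \<delta>) * l" using d2 lp by simp
    show "(1 - \<delta>) * l \<le> ell (1 / v)" by (rule ez)
  qed
  also have "\<dots> = ((1 + \<delta>) * (u * l)) / (((1 - 2*\<delta>) * (1 - \<delta>)) * (u * l))"
    by (simp add: divide_divide_eq_left mult_ac)
  also have "\<dots> = (1 + \<delta>) / ((1 - 2*\<delta>) * (1 - \<delta>))"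
    using u lp by (intro nonzero_mult_divide_mult_cancel_right) auto
  finally show ?thesis using lo by simp
qed


lemma num_bound: fixes \<eta> \<delta> :: real assumes e: "\<eta> > 0" and d: "\<delta> = min (1/10) (\<eta>/10)"
  shows "(1 + \<delta>) / ((1 - 2*\<delta>) * (1 - \<delta>)) \<le> 1 + \<eta>" "1 - \<eta> \<le> 1 - \<delta>"
proof -
  have d1: "0 < \<delta>" "\<delta> \<le> 1/10" "\<delta> \<le> \<eta>/10" using e d by auto
  have P: "(1 - 2*\<delta>) * (1 - \<delta>) = 1 - 3*\<delta> + 2*(\<delta>*\<delta>)" by (simp add: algebra_simps)
  have dd: "0 \<le> \<delta>*\<delta>" by simp
  have Ppos: "0 < (1 - 2*\<delta>) * (1 - \<delta>)" using d1 by simp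
  have ed: "\<eta> * \<delta> \<le> \<eta> * (1/10)" using e d1 by (intro mult_left_mono) auto
  have "(1 + \<eta>) * (1 - 3*\<delta>) = 1 + \<eta> - 3*\<delta> - 3*(\<eta>*\<delta>)" by (simp add: algebra_simps)
  then have a: "1 + \<delta> \<le> (1 + \<eta>) * (1 - 3*\<delta>)" using ed d1 by linarith
  have "(1 + \<eta>) * (1 - 3*\<delta>) \<le> (1 + \<eta>) * ((1 - 2*\<delta>) * (1 - \<delta>))"
    using P dd e by (intro mult_left_mono) auto
  then have "1 + \<delta> \<le> (1 + \<eta>) * ((1 - 2*\<delta>) * (1 - \<delta>))" using a by linarith
  then show "(1 + \<delta>) / ((1 - 2*\<delta>) * (1 - \<delta>)) \<le> 1 + \<eta>" using Ppos by (simp add: pos_divide_le_eq)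
  show "1 - \<eta> \<le> 1 - \<delta>" using d1 e by linarith
qed

lemma Phi_Q_inc: assumes e: "\<eta> > 0"
  shows "\<exists>m0. \<forall>m\<ge>m0. 1 - \<eta> \<le> Phi (1 / Q (Suc m)) - Phi (1 / Q m) \<and> Phi (1 / Q (Suc m)) - Phi (1 / Q m) \<le> 1 + \<eta>"
proof -
  define \<delta> where "\<delta> = min (1/10) (\<eta>/10)"
  have d: "0 < \<delta>" "\<delta> \<le> 1/10" using e unfolding \<delta>_def by auto
  note nb = num_bound[OF e \<delta>_def]
  obtain u0 where u0: "u0 > 0" "u0 \<le> 1" "\<And>u. 0 < u \<Longrightarrow> u \<le> u0 \<Longrightarrow>
      (1 - \<delta>) * u * ell (1/u) \<le> D u \<and> D u \<le> (1 + \<delta>) * u * ell (1/u)"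
    using D_asym[OF d(1)] by blast
  have ev1: "eventually (\<lambda>x. ell x < \<delta>) at_top" using ell_tendsto0 d by (intro order_tendstoD(2)) auto
  have ev2: "eventually (\<lambda>x. (1 - \<delta>) * ell x \<le> ell (2 * x)) at_top" using ell_sv[of 2 \<delta>] d by simp
  obtain X where X: "\<And>x. x \<ge> X \<Longrightarrow> ell x < \<delta> \<and> (1 - \<delta>) * ell x \<le> ell (2 * x)"
    using eventually_conj[OF ev1 ev2] unfolding eventually_at_top_linorder by blast
  define X' where "X' = max X 1"
  have X'1: "X' \<ge> 1" unfolding X'_def by simp
  have "eventually (\<lambda>m. Q m < min u0 (1 / X')) sequentially"
    using Q_lim u0 X'1 by (intro order_tendstoD(2)) auto
  then obtain m0 where m0: "\<And>m. m \<ge> m0 \<Longrightarrow> Q m < min u0 (1 / X')" unfolding eventually_sequentially by blast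
  show ?thesis
  proof (intro exI[of _ m0] allI impI)
    fix m assume m: "m \<ge> m0"
    define u where "u = Q m"
    have u: "0 < u" "u \<le> 1" "u \<le> u0" "u < 1 / X'" using Q_pos[of m] Q_range[of m] m0[OF m] unfolding u_def by auto
    have "u * X' < 1" using u X'1 by (simp add: less_divide_eq)
    then have "X' < 1 / u" using u by (simp add: less_divide_eq mult.commute)
    then have xX: "1 / u \<ge> X" unfolding X'_def by simp
    have v: "0 < Q (Suc m)" "Q (Suc m) = u - D u" using Q_pos[of "Suc m"] Q_Suc'[of m] unfolding u_def by auto
    have Db: "(1 - \<delta>) * u * ell (1/u) \<le> D u" "D u \<le> (1 + \<delta>) * u * ell (1/u)" using u0(3)[OF u(1) u(3)] by auto
    have sm: "ell (1/u) \<le> \<delta>" "(1 - \<delta>) * ell (1/u) \<le> ell (2 * (1/u))" using X[OF xX] by auto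
    have sb: "1 - \<delta> \<le> Phi (1 / Q (Suc m)) - Phi (1/u) \<and> Phi (1 / Q (Suc m)) - Phi (1/u) \<le> (1 + \<delta>) / ((1 - 2*\<delta>) * (1 - \<delta>))"
      by (rule step_bounds[OF d u(1) u(2) v Db sm])
    show "1 - \<eta> \<le> Phi (1 / Q (Suc m)) - Phi (1 / Q m) \<and> Phi (1 / Q (Suc m)) - Phi (1 / Q m) \<le> 1 + \<eta>"
      using sb nb unfolding u_def by linarith
  qed
qed

lemma Q_antimono: "m \<le> n \<Longrightarrow> Q n \<le> Q m"
  using decseqD[OF decseq_SucI[of Q, OF Q_dec]] by blast

lemma invQ_ge1: "1 \<le> 1 / Q m"
  using Q_pos[of m] Q_range[of m] by simp

lemma Phi_Q_lin: assumes e: "\<eta> > 0"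
  shows "\<exists>C. \<forall>m. (1 - \<eta>) * real m - C \<le> Phi (1 / Q m) \<and> Phi (1 / Q m) \<le> (1 + \<eta>) * real m + C"
proof -
  obtain m0 where m0: "\<And>m. m \<ge> m0 \<Longrightarrow> 1 - \<eta> \<le> Phi (1 / Q (Suc m)) - Phi (1 / Q m) \<and> Phi (1 / Q (Suc m)) - Phi (1 / Q m) \<le> 1 + \<eta>"
    using Phi_Q_inc[OF e] by blast
  define P0 where "P0 = Phi (1 / Q m0)"
  have tel: "(1 - \<eta>) * real n \<le> Phi (1 / Q (m0 + n)) - P0 \<and> Phi (1 / Q (m0 + n)) - P0 \<le> (1 + \<eta>) * real n" for n
  proof (induction n)
    case 0 then show ?case by (simp add: P0_def)
  next
    case (Suc n)
    have "1 - \<eta> \<le> Phi (1 / Q (Suc (m0 + n))) - Phi (1 / Q (m0 + n)) \<and> Phi (1 / Q (Suc (m0 + n))) - Phi (1 / Q (m0 + n)) \<le> 1 + \<eta>"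
      by (rule m0) simp
    then show ?case using Suc by (simp add: algebra_simps)
  qed
  define C where "C = \<bar>P0\<bar> + (2 + \<eta>) * real m0"
  show ?thesis
  proof (intro exI[of _ C] allI conjI)
    fix m
    show "(1 - \<eta>) * real m - C \<le> Phi (1 / Q m)"
    proof (cases "m \<ge> m0")
      case True
      then obtain n where n: "m = m0 + n" using le_Suc_ex by blast
      have "(1 - \<eta>) * real m = (1 - \<eta>) * real n + (1 - \<eta>) * real m0" using n by (simp add: algebra_simps)
      moreover have "(1 - \<eta>) * real m0 \<le> (2 + \<eta>) * real m0" using e by (intro mult_right_mono) auto
      ultimately show ?thesis using tel[of n, unfolded n[symmetric]] unfolding C_def by linarith
    next
      case False
      have "(1 - \<eta>) * real m \<le> (2 + \<eta>) * real m0" using False e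
        by (intro mult_mono) auto
      then show ?thesis using Phi_nonneg[OF invQ_ge1[of m]] unfolding C_def by linarith
    qed
    show "Phi (1 / Q m) \<le> (1 + \<eta>) * real m + C"
    proof (cases "m \<ge> m0")
      case True
      then obtain n where n: "m = m0 + n" using le_Suc_ex by blast
      have "(1 + \<eta>) * real n \<le> (1 + \<eta>) * real m" using n e by (intro mult_left_mono) auto
      moreover have "0 \<le> (2 + \<eta>) * real m0" using e by simp
      ultimately show ?thesis using tel[of n, unfolded n[symmetric]] unfolding C_def by linarith
    next
      case False
      have "1 / Q m \<le> 1 / Q m0" using Q_antimono[of m m0] False Q_pos by (intro divide_left_mono) auto
      then have "Phi (1 / Q m) \<le> P0" unfolding P0_def by (intro Phi_mono invQ_ge1)
      moreover have "0 \<le> (1 + \<eta>) * real m" "0 \<le> (2 + \<eta>) * real m0" using e by auto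
      ultimately show ?thesis unfolding C_def by linarith
    qed
  qed
qed

end

context crit begin

abbreviation T :: "real \<Rightarrow> real" where "T x \<equiv> measure_pmf.prob \<mu> {k. x \<le> real k}"

lemma T_pos: "0 < T x"
proof -
  define k0 where "k0 = nat \<lceil>max x 1\<rceil>"
  have k0: "x \<le> real k0" "k0 \<ge> 1" unfolding k0_def by linarith+
  have "pmf \<mu> k0 \<le> T x"
    unfolding measure_pmf_single[symmetric] using k0 by (intro measure_pmf.finite_measure_mono) auto
  then show ?thesis using p_pos[OF k0(2)] by simp
qed

lemma T_mono: "x \<le> y \<Longrightarrow> T y \<le> T x"
  by (intro measure_pmf.finite_measure_mono) auto

lemma ell_ge_xT: assumes "0 \<le> x" shows "x * T x \<le> ell x"
proof -
  have S: "(\<lambda>k. x * (if k \<in> {k. x \<le> real k} then pmf \<mu> k else 0)) sums (x * T x)"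
    by (intro sums_mult pmf_nat_prob_sums)
  show ?thesis unfolding ell_def
  proof (rule sums_le[OF _ S summable_sums[OF ell_summable]])
    fix k show "x * (if k \<in> {k. x \<le> real k} then pmf \<mu> k else 0) \<le> (if x \<le> real k then real k * pmf \<mu> k else 0)"
      using assms by (auto intro: mult_right_mono simp: pmf_nonneg)
  qed
qed

definition EE :: "real \<Rightarrow> real" where
  "EE A = measure_pmf.expectation \<mu> (\<lambda>k. (real k - 1) * (if \<bar>real k - 1\<bar> > A then 1 else 0))"

lemma EE_sums: "(\<lambda>k. pmf \<mu> k * ((real k - 1) * (if \<bar>real k - 1\<bar> > A then 1 else 0))) sums EE A"
  unfolding EE_def
proof (rule pmf_nat_expectation_sums)
  have "summable (\<lambda>k. real k * pmf \<mu> k + pmf \<mu> k)" by (intro summable_add summ_kp summable_p)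
  then show "summable (\<lambda>k. pmf \<mu> k * \<bar>(real k - 1) * (if \<bar>real k - 1\<bar> > A then 1 else 0)\<bar>)"
  proof (rule summable_comparison_test'[where N=0])
    fix k :: nat
    have "\<bar>(real k - 1) * (if \<bar>real k - 1\<bar> > A then 1 else 0)\<bar> \<le> real k + 1" by auto
    then have "pmf \<mu> k * \<bar>(real k - 1) * (if \<bar>real k - 1\<bar> > A then 1 else 0)\<bar> \<le> pmf \<mu> k * (real k + 1)"
      by (intro mult_left_mono) (auto simp: pmf_nonneg)
    then show "norm (pmf \<mu> k * \<bar>(real k - 1) * (if \<bar>real k - 1\<bar> > A then 1 else 0)\<bar>) \<le> real k * pmf \<mu> k + pmf \<mu> k"
      by (simp add: algebra_simps abs_mult pmf_nonneg)
  qed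
qed

lemma EE_upper: assumes A: "A \<ge> 2" shows "EE A \<le> ell A"
  unfolding ell_def
proof (rule sums_le[OF _ EE_sums summable_sums[OF ell_summable]])
  fix k
  show "pmf \<mu> k * ((real k - 1) * (if \<bar>real k - 1\<bar> > A then 1 else 0)) \<le> (if A \<le> real k then real k * pmf \<mu> k else 0)"
  proof (cases "\<bar>real k - 1\<bar> > A")
    case True
    then have "real k - 1 > A" using A by linarith
    then show ?thesis using True by (simp add: pmf_nonneg mult_left_mono algebra_simps)
  qed simp_all
qed

lemma EE_lower: assumes A: "A \<ge> 2" shows "ell (A + 2) / 2 \<le> EE A"
proof -
  have S: "(\<lambda>k. (1/2) * (if A + 2 \<le> real k then real k * pmf \<mu> k else 0)) sums ((1/2) * ell (A + 2))"
    unfolding ell_def by (intro sums_mult summable_sums ell_summable)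
  have "(1/2) * ell (A + 2) \<le> EE A"
  proof (rule sums_le[OF _ S EE_sums])
    fix k
    show "(1/2) * (if A + 2 \<le> real k then real k * pmf \<mu> k else 0) \<le> pmf \<mu> k * ((real k - 1) * (if \<bar>real k - 1\<bar> > A then 1 else 0))"
    proof (cases "A + 2 \<le> real k")
      case True
      then have t: "\<bar>real k - 1\<bar> > A" "real k / 2 \<le> real k - 1" using A by auto
      have "pmf \<mu> k * (real k / 2) \<le> pmf \<mu> k * (real k - 1)" using t by (intro mult_left_mono) (auto simp: pmf_nonneg)
      then show ?thesis using True t by (simp add: algebra_simps)
    next
      case False
      have "0 \<le> (real k - 1) * (if \<bar>real k - 1\<bar> > A then 1 else 0)" using A by auto
      then show ?thesis using False by (simp add: pmf_nonneg)
    qed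
  qed
  then show ?thesis by simp
qed

lemma Phi_ell_inf: assumes K: "K \<ge> 1" shows "filterlim (\<lambda>y. Phi y * ell (K * y)) at_top at_top"
  unfolding filterlim_at_top
proof
  fix B :: real
  define M where "M = exp (2 * max B 0)"
  have M1: "M \<ge> 1" unfolding M_def by simp
  have lnM: "ln M = 2 * max B 0" unfolding M_def by simp
  have ev0: "eventually (\<lambda>x. (1 - 1/2) * ell x \<le> ell ((K * M) * x)) at_top"
  proof -
    have "1 * 1 \<le> K * M" using K M1 by (intro mult_mono) auto
    then show ?thesis using ell_sv[of "K * M" "1/2"] by simp
  qed
  have lim: "filterlim (\<lambda>y. (1/M) * y) at_top at_top"
    using M1 by (intro filterlim_tendsto_pos_mult_at_top[OF tendsto_const]) (auto simp: filterlim_ident)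
  have ev1: "eventually (\<lambda>y. (1 - 1/2) * ell ((1/M) * y) \<le> ell ((K * M) * ((1/M) * y))) at_top"
    using filterlim_iff[THEN iffD1, OF lim, rule_format, OF ev0] .
  show "eventually (\<lambda>y. B \<le> Phi y * ell (K * y)) at_top"
    using ev1 eventually_ge_at_top[of M]
  proof eventually_elim
    case (elim y)
    define w where "w = (1/M) * y"
    have w1: "1 \<le> w" "w \<le> y" using elim(2) M1 unfolding w_def by (auto simp: field_simps)
    have KMw: "(K * M) * w = K * y" unfolding w_def using M1 by simp
    have ew: "ell w > 0" by (rule ell_pos)
    have "(ln y - ln w) / ell w \<le> Phi y - Phi w" using Phi_bounds[OF w1] by simp
    moreover have "ln y - ln w = ln M" unfolding w_def using M1 elim(2) by (simp add: ln_mult ln_div)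
    moreover have "0 \<le> Phi w" by (rule Phi_nonneg[OF w1(1)])
    ultimately have P: "ln M / ell w \<le> Phi y" by simp
    have E: "ell w / 2 \<le> ell (K * y)" using elim(1) KMw unfolding w_def[symmetric] by simp
    have "B \<le> ln M / 2" using lnM by simp
    also have "\<dots> = (ln M / ell w) * (ell w / 2)" using ew by simp
    also have "\<dots> \<le> Phi y * ell (K * y)"
      using P E ew lnM Phi_nonneg[of y] w1 by (intro mult_mono) auto
    finally show ?case .
  qed
qed

end

context crit begin

lemma main_claims:
  fixes a :: "nat \<Rightarrow> real" and \<epsilon> :: real
  assumes hA: "(\<lambda>n. real n * measure_pmf.prob \<mu> {k. real k \<ge> a n}) \<longlonglongrightarrow> 1"
    and e: "\<epsilon> > 0"
  shows "(\<lambda>n. b_seq \<mu> a n * height_tail \<mu> ((1 + \<epsilon>) * h_seq \<mu> a n)) \<longlonglongrightarrow> 0 \<and>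
         filterlim (\<lambda>n. b_seq \<mu> a n * height_tail \<mu> ((1 - \<epsilon>) * h_seq \<mu> a n)) at_top sequentially"
proof -
  have Tlim: "(\<lambda>n. T (a n)) \<longlonglongrightarrow> 0"
  proof -
    have "(\<lambda>n. (real n * T (a n)) * inverse (real n)) \<longlonglongrightarrow> 1 * 0"
      by (intro tendsto_mult hA tendsto_inverse_0_at_top filterlim_real_sequentially)
    moreover have "eventually (\<lambda>n. (real n * T (a n)) * inverse (real n) = T (a n)) sequentially"
      using eventually_gt_at_top[of 0] by eventually_elim simp
    ultimately show ?thesis by (simp add: tendsto_cong)
  qed
  have a_top: "filterlim a at_top sequentially"
    unfolding filterlim_at_top
  proof
    fix Z :: real
    have "eventually (\<lambda>n. T (a n) < T Z) sequentially"
      using Tlim T_pos[of Z] by (intro order_tendstoD(2)) auto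
    then show "eventually (\<lambda>n. Z \<le> a n) sequentially"
    proof eventually_elim
      case (elim n) then show ?case using T_mono[of "a n" Z] by (cases "Z \<le> a n") auto
    qed
  qed
  define y where "y n = real n * trunc_mean \<mu> (a n)" for n
  have y_ell: "y n = real n * ell (a n)" for n unfolding y_def trunc_mean_eq ..
  have h_eq: "h_seq \<mu> a n = Phi (y n)" for n
    unfolding h_seq_def Phi_def gI_def y_def ..
  have b_eq: "b_seq \<mu> a n = real n * EE (a n)" for n
    unfolding b_seq_def EE_def ..
  have ev_a2: "eventually (\<lambda>n. a n \<ge> 2) sequentially"
    using a_top unfolding filterlim_at_top by blast
  have ev_nT: "eventually (\<lambda>n. real n * T (a n) > 1/2) sequentially"
    using hA by (intro order_tendstoD(1)) auto
  have a_half: "filterlim (\<lambda>n. (1/2) * a n) at_top sequentially"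
    by (intro filterlim_tendsto_pos_mult_at_top[OF tendsto_const _ a_top]) simp
  have y_ge: "eventually (\<lambda>n. (1/2) * a n \<le> y n) sequentially"
    using ev_a2 ev_nT
  proof eventually_elim
    case (elim n)
    have "a n * (1/2) \<le> a n * (real n * T (a n))" using elim by (intro mult_left_mono) (auto intro: less_imp_le)
    then have "(1/2) * a n \<le> a n * (real n * T (a n))" by (simp add: mult.commute)
    also have "\<dots> = real n * (a n * T (a n))" by (simp add: mult_ac)
    also have "\<dots> \<le> real n * ell (a n)" using ell_ge_xT[of "a n"] elim by (intro mult_left_mono) auto
    finally show ?case by (simp add: y_ell)
  qed
  have y_top: "filterlim y at_top sequentially"
    by (rule filterlim_at_top_mono[OF a_half y_ge])
  have ev_ell2: "eventually (\<lambda>n. (1 - 1/2) * ell (a n) \<le> ell (2 * a n)) sequentially"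
    using filterlim_iff[THEN iffD1, OF a_top, rule_format, OF ell_sv[of 2 "1/2"]] by simp
  have b_bounds: "eventually (\<lambda>n. y n / 4 \<le> b_seq \<mu> a n \<and> b_seq \<mu> a n \<le> y n) sequentially"
    using ev_a2 ev_ell2
  proof eventually_elim
    case (elim n)
    have "EE (a n) \<le> ell (a n)" using EE_upper elim by simp
    then have up: "b_seq \<mu> a n \<le> y n" unfolding b_eq y_ell by (intro mult_left_mono) auto
    have "ell (2 * a n) \<le> ell (a n + 2)" using elim by (intro ell_mono) auto
    then have "ell (a n) / 4 \<le> EE (a n)" using EE_lower[of "a n"] elim by simp
    then have "real n * (ell (a n) / 4) \<le> real n * EE (a n)" by (intro mult_left_mono) auto
    then have lo: "y n / 4 \<le> b_seq \<mu> a n" unfolding b_eq y_ell by simp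
    show ?case using up lo by simp
  qed
  have ev_y1: "eventually (\<lambda>n. y n \<ge> 1) sequentially"
    using y_top unfolding filterlim_at_top by blast
  have PE: "filterlim (\<lambda>n. Phi (y n) * ell (K * y n)) at_top sequentially" if "K \<ge> 1" for K
    by (rule filterlim_compose[OF Phi_ell_inf[OF that] y_top])
  have ht: "height_tail \<mu> (c * h_seq \<mu> a n) = Q (nat \<lceil>c * Phi (y n)\<rceil>)" for c n
    unfolding h_eq height_tail_eq ..
  have claim1: "(\<lambda>n. b_seq \<mu> a n * height_tail \<mu> ((1 + \<epsilon>) * h_seq \<mu> a n)) \<longlonglongrightarrow> 0"
  proof -
    define \<eta> where "\<eta> = \<epsilon> / (2 * (1 + \<epsilon>))"
    have eta: "\<eta> > 0" "\<eta> < 1" "(1 - \<eta>) * (1 + \<epsilon>) = 1 + \<epsilon>/2" using e unfolding \<eta>_def by (auto simp: field_simps)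
    obtain C where C: "\<And>m. (1 - \<eta>) * real m - C \<le> Phi (1 / Q m)" using Phi_Q_lin[OF eta(1)] by blast
    define m where "m n = nat \<lceil>(1 + \<epsilon>) * Phi (y n)\<rceil>" for n
    have yQ: "(\<lambda>n. y n * Q (m n)) \<longlonglongrightarrow> 0"
    proof (rule tendstoI)
      fix r :: real assume r: "r > 0"
      define K where "K = max 1 (2 / r)"
      have K1: "K \<ge> 1" unfolding K_def by simp
      have ev: "eventually (\<lambda>n. Phi (y n) * ell (K * y n) > (2 / \<epsilon>) * (ln K + \<bar>C\<bar>)) sequentially"
        using PE[OF K1] unfolding filterlim_at_top_dense by blast
      from ev ev_y1 show "eventually (\<lambda>n. dist (y n * Q (m n)) 0 < r) sequentially"
      proof eventually_elim
        case (elim n)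
        define Y where "Y = y n"
        have Y1: "Y \<ge> 1" using elim unfolding Y_def by simp
        have PY: "0 \<le> Phi Y" using Phi_nonneg[OF Y1] .
        define z where "z = 1 / Q (m n)"
        have z1: "z \<ge> 1" unfolding z_def by (rule invQ_ge1)
        have Qp: "Q (m n) > 0" by (rule Q_pos)
        have mge: "(1 + \<epsilon>) * Phi Y \<le> real (m n)" unfolding m_def Y_def by (rule real_nat_ceiling_ge)
        have zlow: "(1 + \<epsilon>/2) * Phi Y - C \<le> Phi z"
        proof -
          have "(1 - \<eta>) * ((1 + \<epsilon>) * Phi Y) \<le> (1 - \<eta>) * real (m n)"
            using mge eta by (intro mult_left_mono) auto
          then show ?thesis using C[of "m n"] eta(3) unfolding z_def by (simp add: mult.assoc[symmetric])
        qed
        have zK: "K * Y < z"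
        proof (rule ccontr)
          assume "\<not> K * Y < z"
          then have zle: "z \<le> K * Y" by simp
          have KY: "Y \<le> K * Y" using K1 Y1 by simp
          have "Phi z \<le> Phi (K * Y)" using z1 zle by (rule Phi_mono)
          moreover have "ln (K * Y) - ln Y = ln K" using K1 Y1 by (simp add: ln_mult)
          then have "Phi (K * Y) - Phi Y \<le> ln K / ell (K * Y)"
            using Phi_bounds[OF Y1 KY] by simp
          moreover have "(1 + \<epsilon>/2) * Phi Y = Phi Y + (\<epsilon>/2) * Phi Y" by (simp add: algebra_simps)
          ultimately have "(\<epsilon>/2) * Phi Y \<le> ln K / ell (K * Y) + C" using zlow by linarith
          then have "(\<epsilon>/2) * Phi Y * ell (K * Y) \<le> (ln K / ell (K * Y) + C) * ell (K * Y)"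
            using ell_pos[of "K * Y"] by (intro mult_right_mono) auto
          also have "\<dots> = ln K + C * ell (K * Y)" using ell_pos[of "K * Y"] by (simp add: field_simps)
          also have "\<dots> \<le> ln K + \<bar>C\<bar>"
          proof -
            have "C * ell (K * Y) \<le> \<bar>C\<bar> * ell (K * Y)" using ell_pos[of "K*Y"] by (intro mult_right_mono) auto
            also have "\<dots> \<le> \<bar>C\<bar> * 1" using ell_le1[of "K*Y"] by (intro mult_left_mono) auto
            finally show ?thesis by simp
          qed
          finally have "Phi Y * ell (K * Y) \<le> (2 / \<epsilon>) * (ln K + \<bar>C\<bar>)" using e by (simp add: field_simps)
          then show False using elim(1) unfolding Y_def by simp
        qed
        have "y n * Q (m n) = Y / z" unfolding Y_def z_def by simp
        also have "\<dots> < 1 / K" using zK Y1 K1 z1 by (simp add: field_simps)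
        also have "\<dots> \<le> r / 2"
        proof -
          have "2 / r \<le> K" unfolding K_def by simp
          then have "1 / K \<le> 1 / (2 / r)" using r K1 by (intro divide_left_mono) auto
          then show ?thesis by simp
        qed
        finally have "y n * Q (m n) < r" using r by simp
        moreover have "0 \<le> y n * Q (m n)" using Y1 Qp unfolding Y_def by simp
        ultimately show ?case by simp
      qed
    qed
    have "(\<lambda>n. b_seq \<mu> a n * Q (m n)) \<longlonglongrightarrow> 0"
    proof (rule tendsto_sandwich[OF _ _ tendsto_const yQ])
      show "eventually (\<lambda>n. 0 \<le> b_seq \<mu> a n * Q (m n)) sequentially"
        using b_bounds ev_y1 by eventually_elim (auto intro!: mult_nonneg_nonneg less_imp_le[OF Q_pos])
      show "eventually (\<lambda>n. b_seq \<mu> a n * Q (m n) \<le> y n * Q (m n)) sequentially"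
        using b_bounds by eventually_elim (auto intro!: mult_right_mono less_imp_le[OF Q_pos])
    qed
    then show ?thesis unfolding ht m_def .
  qed
  have claim2: "filterlim (\<lambda>n. b_seq \<mu> a n * height_tail \<mu> ((1 - \<epsilon>) * h_seq \<mu> a n)) at_top sequentially"
  proof (cases "\<epsilon> \<ge> 1")
    case True
    have ev4: "eventually (\<lambda>n. (1/4) * y n \<le> b_seq \<mu> a n * height_tail \<mu> ((1 - \<epsilon>) * h_seq \<mu> a n)) sequentially"
      using b_bounds ev_y1
    proof eventually_elim
      case (elim n)
      have "(1 - \<epsilon>) * Phi (y n) \<le> 0" using True Phi_nonneg[of "y n"] elim by (simp add: mult_nonpos_nonneg)
      then have "nat \<lceil>(1 - \<epsilon>) * Phi (y n)\<rceil> = 0" by linarith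
      then show ?case using elim unfolding ht by (simp add: Q_0)
    qed
    have "filterlim (\<lambda>n. (1/4) * y n) at_top sequentially"
      by (intro filterlim_tendsto_pos_mult_at_top[OF tendsto_const _ y_top]) simp
    from filterlim_at_top_mono[OF this ev4] show ?thesis .
  next
    case False
    define \<eta> where "\<eta> = \<epsilon> / (2 * (1 - \<epsilon>))"
    have eta: "\<eta> > 0" "(1 + \<eta>) * (1 - \<epsilon>) = 1 - \<epsilon>/2" using e False unfolding \<eta>_def by (auto simp: field_simps)
    obtain C where C: "\<And>m. Phi (1 / Q m) \<le> (1 + \<eta>) * real m + C" using Phi_Q_lin[OF eta(1)] by blast
    define C' where "C' = C + (1 + \<eta>)"
    define m where "m n = nat \<lceil>(1 - \<epsilon>) * Phi (y n)\<rceil>" for n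
    show ?thesis unfolding ht m_def[symmetric] filterlim_at_top
    proof
      fix B :: real
      define K where "K = max 1 (4 * B)"
      have K1: "K \<ge> 1" unfolding K_def by simp
      have ev: "eventually (\<lambda>n. Phi (y n) * ell (1 * y n) > (2 / \<epsilon>) * (ln K + \<bar>C'\<bar>)) sequentially"
        using PE[of 1] unfolding filterlim_at_top_dense by blast
      have evK: "eventually (\<lambda>n. y n \<ge> K) sequentially"
        using y_top unfolding filterlim_at_top by blast
      from ev evK ev_y1 b_bounds
      show "eventually (\<lambda>n. B \<le> b_seq \<mu> a n * Q (m n)) sequentially"
      proof eventually_elim
        case (elim n)
        define Y where "Y = y n"
        have Y1: "Y \<ge> 1" "Y \<ge> K" using elim unfolding Y_def by auto
        have PY: "0 \<le> Phi Y" using Phi_nonneg[OF Y1(1)] .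
        define z where "z = 1 / Q (m n)"
        have z1: "z \<ge> 1" unfolding z_def by (rule invQ_ge1)
        have Qp: "Q (m n) > 0" by (rule Q_pos)
        have mle: "real (m n) \<le> (1 - \<epsilon>) * Phi Y + 1"
        proof -
          have "0 \<le> (1 - \<epsilon>) * Phi Y" using False PY by simp
          then show ?thesis unfolding m_def Y_def by linarith
        qed
        have zup: "Phi z \<le> (1 - \<epsilon>/2) * Phi Y + C'"
        proof -
          have "(1 + \<eta>) * real (m n) \<le> (1 + \<eta>) * ((1 - \<epsilon>) * Phi Y + 1)"
            using mle eta by (intro mult_left_mono) auto
          also have "\<dots> = ((1 + \<eta>) * (1 - \<epsilon>)) * Phi Y + (1 + \<eta>)" by (simp add: algebra_simps)
          also have "\<dots> = (1 - \<epsilon>/2) * Phi Y + (1 + \<eta>)" by (simp only: eta(2))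
          finally show ?thesis using C[of "m n"] unfolding z_def C'_def by simp
        qed
        have zK: "z * K < Y"
        proof (rule ccontr)
          assume "\<not> z * K < Y"
          then have zle: "Y / K \<le> z" using K1 by (simp add: field_simps)
          have YK1: "1 \<le> Y / K" using Y1 K1 by simp
          have YK2: "Y / K \<le> Y" using Y1 K1 by (simp add: field_simps)
          have "Phi (Y / K) \<le> Phi z" using YK1 zle by (rule Phi_mono)
          moreover have "ln Y - ln (Y / K) = ln K" using K1 Y1 by (simp add: ln_div)
          then have "Phi Y - Phi (Y / K) \<le> ln K / ell Y"
            using Phi_bounds[OF YK1 YK2] by simp
          moreover have "(1 - \<epsilon>/2) * Phi Y = Phi Y - (\<epsilon>/2) * Phi Y" by (simp add: algebra_simps)
          ultimately have "(\<epsilon>/2) * Phi Y \<le> ln K / ell Y + C'" using zup by linarith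
          then have "(\<epsilon>/2) * Phi Y * ell Y \<le> (ln K / ell Y + C') * ell Y"
            using ell_pos[of Y] by (intro mult_right_mono) auto
          also have "\<dots> = ln K + C' * ell Y" using ell_pos[of Y] by (simp add: field_simps)
          also have "\<dots> \<le> ln K + \<bar>C'\<bar>"
          proof -
            have "C' * ell Y \<le> \<bar>C'\<bar> * ell Y" using ell_pos[of Y] by (intro mult_right_mono) auto
            also have "\<dots> \<le> \<bar>C'\<bar> * 1" using ell_le1[of Y] by (intro mult_left_mono) auto
            finally show ?thesis by simp
          qed
          finally have "Phi Y * ell Y \<le> (2 / \<epsilon>) * (ln K + \<bar>C'\<bar>)" using e by (simp add: field_simps)
          then show False using elim(1) unfolding Y_def by simp
        qed
        have "B \<le> K / 4" unfolding K_def by simp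
        also have "\<dots> \<le> (Y / z) / 4" using zK z1 by (simp add: field_simps)
        also have "\<dots> = Y / 4 * Q (m n)" unfolding z_def by simp
        also have "\<dots> \<le> b_seq \<mu> a n * Q (m n)" using elim(4) Qp unfolding Y_def by (intro mult_right_mono) auto
        finally show ?case .
      qed
    qed
  qed
  show ?thesis using claim1 claim2 by simp
qed

end

theorem mainTheorem7:
  fixes \<mu> :: "nat pmf" and a :: "nat \<Rightarrow> real" and \<epsilon> :: real
  assumes "H_mu \<mu>"
    and "(\<lambda>n. real n * measure_pmf.prob \<mu> {k. real k \<ge> a n}) \<longlonglongrightarrow> 1"
    and "\<epsilon> > 0"
  shows "(\<lambda>n. b_seq \<mu> a n * height_tail \<mu> ((1 + \<epsilon>) * h_seq \<mu> a n)) \<longlonglongrightarrow> 0 \<and>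
         filterlim (\<lambda>n. b_seq \<mu> a n * height_tail \<mu> ((1 - \<epsilon>) * h_seq \<mu> a n)) at_top sequentially"
proof -
  from assms(1) obtain L where m: "(\<lambda>k. real k * pmf \<mu> k) sums 1" and sv: "slowly_varying L"
    and pl: "\<forall>n\<ge>1. pmf \<mu> n = L (real n) / (real n)^2"
    unfolding H_mu_def by blast
  interpret crit \<mu> L using m sv pl by unfold_locales auto
  show ?thesis by (rule main_claims[OF assms(2) assms(3)])
qed

end
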